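(* Let $n>2$ be even, let $G$ be a group of order $2n$ containing a cyclic subgroup $H$ of index $2$, let $j$ be the unique involution of $H$, and let $\{h_1,\dots,h_{n/2}\}$ be a set of representatives of the cosets of $\{1,j\}$ in $H$. Let $\Sigma=\{S_1,\dots,S_r\}$ be a starter in $G$ with associated subgroups $H_1,\dots,H_r$ such that $S_1=\{e\}$ with $\partial e=\{j\}$, and let $\mathcal F$ be the associated $G$-regular $1$-factorization, with fixed $1$-factor $F_1=Orb_G(e)$ and, for $i\ge2$, the $1$-factors $F_i^1,\dots,F_i^{t_i}$ forming the $G$-orbit of $F_i=\bigcup_{f\in S_i}Orb_{H_i}(f)$, where $t_i=[G:H_i]$. Let $R=R_2\cup\dots\cup R_r$ be a subgraph of $K_{2n}$ such that: (1) for each $i\in\{2,\dots,r\}$, $R_i$ consists of $t_i$ edges, one in each of the $1$-factors $F_i^1,\dots,F_i^{t_i}$, and the set of distinct elements of $\partial R_i$ equals $\partial S_i$; (2) if $l$ is a long edge of $R_i$ ($2\le i\le r$), there is exactly one edge $l'\in R_i$ with $\partial l=\partial l'$ and $l'\notin Orb_H(l)$; if $l$ is a short edge of $R_i$, it is the unique edge of $R_i$ with difference set $\partial l$; (3) there exist two distinct edges $e_1,e_2$ of $F_1$ with $Orb_H(e_1)\cap Orb_H(e_2)=\emptyset$ such that both $R\cup\{e_1\}$ and $R\cup\{e_2\}$ are spanning connected subgraphs of $K_{2n}$. Put $T_1=R\cup\{e_1\}$ and $T_2=Rj\cup\{e_2\}$. Then $\mathcal T=\{T_1h_1,\dots,T_1h_{n/2}\}\cup\{T_2h_1,\dots,T_2h_{n/2}\}$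 is a complete set of rainbow spanning trees for $\mathcal F$.
   Context: Vertices of $K_{2n}$ are the elements of $G$; $G$ acts by right multiplication: $[x,y]\cdot g=[xg,yg]$, and for a set $U$ of edges $Ug=\{[xg,yg]:[x,y]\in U\}$. $Orb_K(f)$ denotes the orbit of an edge $f$ under a subgroup $K$. An edge $[x,y]$ is long if its $G$-orbit has length $2n$ and short if it has length $n$ (equivalently $x^{-1}y$ is an involution; this involution is the one associated with the short edge). Define $\partial([x,y])=\{xy^{-1},yx^{-1}\}$ if the edge is long and $\{xy^{-1}\}$ if short; $\phi([x,y])=\{x,y\}$ if long and $\{x\}$ if short; for a set $S$ of edges $\partial S,\phi(S)$ are the (multiset) unions. A starter in $G$ is a family $\{S_1,\dots,S_k\}$ of sets of edges with subgroups $H_1,\dots,H_k$ such that (i) $\partial S_1\cup\dots\cup\partial S_k=G\setminus\{1\}$ (as a set, without repetition); (ii) each $\phi(S_i)$ is a left transversal of $H_i$ in $G$; (iii) each $H_i$ contains the involutions associated with the short edges of $S_i$. The associated $G$-regular $1$-factorization consists of the $G$-orbits of the $1$-factors $F_i=\bigcup_{f\in S_i}Orb_{H_i}(f)$. A $1$-factorization is $G$-regular if $G$ (acting sharply transitively on vertices) permutes its $1$-factors. A rainbow spanning tree is a spanning tree with exactly one edge in each $1$-factor; a complete set of rainbow spanning trees is a set of such trees partitioning the edge set. *)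

theory Defs
  imports "HOL-Algebra.Algebra" "HOL-Library.Multiset"
begin

definition Kedges :: "('a, 'b) monoid_scheme \<Rightarrow> 'a set set" where
  "Kedges G = {e. e \<subseteq> carrier G \<and> card e = 2}"

definition edge_act :: "('a, 'b) monoid_scheme \<Rightarrow> 'a set \<Rightarrow> 'a \<Rightarrow> 'a set" where
  "edge_act G f g = (\<lambda>x. x \<otimes>\<^bsub>G\<^esub> g) ` f"

definition edges_act :: "('a, 'b) monoid_scheme \<Rightarrow> 'a set set \<Rightarrow> 'a \<Rightarrow> 'a set set" where
  "edges_act G U g = (\<lambda>f. edge_act G f g) ` U"

definition Orb :: "('a, 'b) monoid_scheme \<Rightarrow> 'a set \<Rightarrow> 'a set \<Rightarrow> 'a set set" where
  "Orb G K f = (\<lambda>g. edge_act G f g) ` K"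

definition long_edge :: "('a, 'b) monoid_scheme \<Rightarrow> 'a set \<Rightarrow> bool" where
  "long_edge G f \<longleftrightarrow> card (Orb G (carrier G) f) = order G"

definition short_edge :: "('a, 'b) monoid_scheme \<Rightarrow> 'a set \<Rightarrow> bool" where
  "short_edge G f \<longleftrightarrow> 2 * card (Orb G (carrier G) f) = order G"

text \<open>The differences x y^{-1} of an edge [x,y]: the set {x y^{-1}, y x^{-1}}
  (which collapses to the single element {x y^{-1}} exactly for short edges).\<close>
definition diffs :: "('a, 'b) monoid_scheme \<Rightarrow> 'a set \<Rightarrow> 'a set" where
  "diffs G f = {x \<otimes>\<^bsub>G\<^esub> inv\<^bsub>G\<^esub> y | x y. x \<in> f \<and> y \<in> f \<and> x \<noteq> y}"

definition dS :: "('a, 'b) monoid_scheme \<Rightarrow> 'a set set \<Rightarrow> 'a multiset" where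
  "dS G S = (\<Sum>f\<in>S. mset_set (diffs G f))"

definition phi :: "('a, 'b) monoid_scheme \<Rightarrow> 'a set \<Rightarrow> 'a multiset" where
  "phi G f = (if long_edge G f then mset_set f else {# SOME x. x \<in> f #})"

definition phiS :: "('a, 'b) monoid_scheme \<Rightarrow> 'a set set \<Rightarrow> 'a multiset" where
  "phiS G S = (\<Sum>f\<in>S. phi G f)"

definition left_transversal :: "('a, 'b) monoid_scheme \<Rightarrow> 'a set \<Rightarrow> 'a multiset \<Rightarrow> bool" where
  "left_transversal G H T \<longleftrightarrow> set_mset T \<subseteq> carrier G \<and>
     (\<forall>x\<in>carrier G. size (filter_mset (\<lambda>y. y \<in> x <#\<^bsub>G\<^esub> H) T) = 1)"

definition starter :: "('a, 'b) monoid_scheme \<Rightarrow> nat \<Rightarrow> (nat \<Rightarrow> 'a set set) \<Rightarrow> (nat \<Rightarrow> 'a set) \<Rightarrow> bool" where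
  "starter G r S Hs \<longleftrightarrow>
     (\<forall>i\<in>{1..r}. S i \<subseteq> Kedges G \<and> subgroup (Hs i) G) \<and>
     (\<Sum>i\<in>{1..r}. dS G (S i)) = mset_set (carrier G - {\<one>\<^bsub>G\<^esub>}) \<and>
     (\<forall>i\<in>{1..r}. left_transversal G (Hs i) (phiS G (S i))) \<and>
     (\<forall>i\<in>{1..r}. \<forall>f\<in>S i. short_edge G f \<longrightarrow>
         (\<forall>x\<in>f. \<forall>y\<in>f. x \<noteq> y \<longrightarrow> inv\<^bsub>G\<^esub> x \<otimes>\<^bsub>G\<^esub> y \<in> Hs i))"

definition base_factor :: "('a, 'b) monoid_scheme \<Rightarrow> (nat \<Rightarrow> 'a set set) \<Rightarrow> (nat \<Rightarrow> 'a set) \<Rightarrow> nat \<Rightarrow> 'a set set" where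
  "base_factor G S Hs i = (\<Union>f\<in>S i. Orb G (Hs i) f)"

definition factor_orbit :: "('a, 'b) monoid_scheme \<Rightarrow> (nat \<Rightarrow> 'a set set) \<Rightarrow> (nat \<Rightarrow> 'a set) \<Rightarrow> nat \<Rightarrow> 'a set set set" where
  "factor_orbit G S Hs i = (\<lambda>g. edges_act G (base_factor G S Hs i) g) ` carrier G"

definition assoc_factorization :: "('a, 'b) monoid_scheme \<Rightarrow> nat \<Rightarrow> (nat \<Rightarrow> 'a set set) \<Rightarrow> (nat \<Rightarrow> 'a set) \<Rightarrow> 'a set set set" where
  "assoc_factorization G r S Hs = (\<Union>i\<in>{1..r}. factor_orbit G S Hs i)"

definition adj_rel :: "'a set set \<Rightarrow> ('a \<times> 'a) set" where
  "adj_rel T = {(x, y). {x, y} \<in> T \<and> x \<noteq> y}"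

definition spanning_connected :: "('a, 'b) monoid_scheme \<Rightarrow> 'a set set \<Rightarrow> bool" where
  "spanning_connected G T \<longleftrightarrow> T \<subseteq> Kedges G \<and>
     (\<forall>x\<in>carrier G. \<forall>y\<in>carrier G. (x, y) \<in> (adj_rel T)\<^sup>*)"

definition has_cycle :: "'a set set \<Rightarrow> bool" where
  "has_cycle T \<longleftrightarrow> (\<exists>vs. length vs \<ge> 3 \<and> distinct vs \<and>
     (\<forall>i < length vs - 1. {vs ! i, vs ! (i + 1)} \<in> T) \<and> {last vs, hd vs} \<in> T)"

definition spanning_tree :: "('a, 'b) monoid_scheme \<Rightarrow> 'a set set \<Rightarrow> bool" where
  "spanning_tree G T \<longleftrightarrow> spanning_connected G T \<and> \<not> has_cycle T"

definition rainbow_spanning_tree :: "('a, 'b) monoid_scheme \<Rightarrow> 'a set set set \<Rightarrow> 'a set set \<Rightarrow> bool" where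
  "rainbow_spanning_tree G FF T \<longleftrightarrow> spanning_tree G T \<and> (\<forall>F\<in>FF. card (T \<inter> F) = 1)"

definition complete_rainbow_set :: "('a, 'b) monoid_scheme \<Rightarrow> 'a set set set \<Rightarrow> 'a set set set \<Rightarrow> bool" where
  "complete_rainbow_set G FF TT \<longleftrightarrow>
     (\<forall>T\<in>TT. rainbow_spanning_tree G FF T) \<and>
     (\<Union>TT) = Kedges G \<and>
     (\<forall>T1\<in>TT. \<forall>T2\<in>TT. T1 \<noteq> T2 \<longrightarrow> T1 \<inter> T2 = {})"

end

theory Submission
  imports Defs
begin

context group begin

lemma Kedges_iff: "f \<in> Kedges G \<longleftrightarrow> (\<exists>x y. x \<in> carrier G \<and> y \<in> carrier G \<and> x \<noteq> y \<and> f = {x, y})"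
  unfolding Kedges_def by (auto simp: card_2_iff)

lemma ea_pair: "edge_act G {x, y} g = {x \<otimes> g, y \<otimes> g}"
  unfolding edge_act_def by auto

lemma ea_comp: "f \<subseteq> carrier G \<Longrightarrow> g \<in> carrier G \<Longrightarrow> g' \<in> carrier G \<Longrightarrow>
   edge_act G (edge_act G f g) g' = edge_act G f (g \<otimes> g')"
  unfolding edge_act_def image_image by (intro image_cong) (auto simp: m_assoc)

lemma ea_one: "f \<subseteq> carrier G \<Longrightarrow> edge_act G f \<one> = f"
  unfolding edge_act_def by (auto simp: subset_iff)

lemma ea_sub: "f \<subseteq> carrier G \<Longrightarrow> g \<in> carrier G \<Longrightarrow> edge_act G f g \<subseteq> carrier G"
  unfolding edge_act_def by auto

lemma ea_inj: "f \<subseteq> carrier G \<Longrightarrow> f' \<subseteq> carrier G \<Longrightarrow> g \<in> carrier G \<Longrightarrow>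
   edge_act G f g = edge_act G f' g \<Longrightarrow> f = f'"
  by (metis ea_comp ea_one r_inv inv_closed)

lemma ea_Kedges: "f \<in> Kedges G \<Longrightarrow> g \<in> carrier G \<Longrightarrow> edge_act G f g \<in> Kedges G"
proof -
  assume "f \<in> Kedges G" "g \<in> carrier G"
  then obtain x y where xy: "x \<in> carrier G" "y \<in> carrier G" "x \<noteq> y" "f = {x, y}"
    unfolding Kedges_iff by auto
  then have "x \<otimes> g \<noteq> y \<otimes> g" using \<open>g \<in> carrier G\<close> by auto
  then show ?thesis unfolding Kedges_iff using xy \<open>g \<in> carrier G\<close>
    by (intro exI[of _ "x \<otimes> g"] exI[of _ "y \<otimes> g"]) (auto simp: ea_pair)
qed

lemma diffs_pair: "x \<in> carrier G \<Longrightarrow> y \<in> carrier G \<Longrightarrow> x \<noteq> y \<Longrightarrow>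
   diffs G {x, y} = {x \<otimes> inv y, y \<otimes> inv x}"
  unfolding diffs_def by auto

lemma ea_diffs: "f \<in> Kedges G \<Longrightarrow> g \<in> carrier G \<Longrightarrow> diffs G (edge_act G f g) = diffs G f"
proof -
  assume "f \<in> Kedges G" "g \<in> carrier G"
  then obtain x y where xy: "x \<in> carrier G" "y \<in> carrier G" "x \<noteq> y" "f = {x, y}"
    unfolding Kedges_iff by auto
  have ne: "x \<otimes> g \<noteq> y \<otimes> g" using xy \<open>g \<in> carrier G\<close> by auto
  have 1: "(x \<otimes> g) \<otimes> inv (y \<otimes> g) = x \<otimes> inv y"
    if "x \<in> carrier G" "y \<in> carrier G" for x y
    using that \<open>g \<in> carrier G\<close> by (simp add: inv_mult_group m_assoc[symmetric]) (simp add: m_assoc)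
  show ?thesis using xy ne \<open>g \<in> carrier G\<close>
    by (simp add: ea_pair diffs_pair 1)
qed

lemma diffs_nonempty: "f \<in> Kedges G \<Longrightarrow> diffs G f \<noteq> {}"
  unfolding Kedges_iff by (auto simp: diffs_pair)

lemma diffs_sub: "f \<in> Kedges G \<Longrightarrow> diffs G f \<subseteq> carrier G"
  unfolding Kedges_iff by (auto simp: diffs_pair)

lemma eas_comp: "T \<subseteq> Kedges G \<Longrightarrow> g \<in> carrier G \<Longrightarrow> g' \<in> carrier G \<Longrightarrow>
   edges_act G (edges_act G T g) g' = edges_act G T (g \<otimes> g')"
  unfolding edges_act_def image_image Kedges_def by (intro image_cong) (auto simp: ea_comp)

lemma eas_one: "T \<subseteq> Kedges G \<Longrightarrow> edges_act G T \<one> = T"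
  unfolding edges_act_def Kedges_def by (auto simp: ea_one subset_iff)

lemma eas_Kedges: "T \<subseteq> Kedges G \<Longrightarrow> g \<in> carrier G \<Longrightarrow> edges_act G T g \<subseteq> Kedges G"
  unfolding edges_act_def using ea_Kedges by auto

lemma ea_inj_on: "g \<in> carrier G \<Longrightarrow> inj_on (\<lambda>f. edge_act G f g) (Kedges G)"
  unfolding inj_on_def Kedges_def using ea_inj by blast

lemma card_eas: "T \<subseteq> Kedges G \<Longrightarrow> g \<in> carrier G \<Longrightarrow> card (edges_act G T g) = card T"
  unfolding edges_act_def by (rule card_image[OF inj_on_subset[OF ea_inj_on]])

lemma eas_Int: "A \<subseteq> Kedges G \<Longrightarrow> B \<subseteq> Kedges G \<Longrightarrow> g \<in> carrier G \<Longrightarrow>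
   edges_act G (A \<inter> B) g = edges_act G A g \<inter> edges_act G B g"
  unfolding edges_act_def
  by (rule inj_on_image_Int[OF ea_inj_on]) auto

lemma eas_mem: "T \<subseteq> Kedges G \<Longrightarrow> f \<in> Kedges G \<Longrightarrow> g \<in> carrier G \<Longrightarrow>
   edge_act G f g \<in> edges_act G T g \<longleftrightarrow> f \<in> T"
  unfolding edges_act_def using ea_inj_on[unfolded inj_on_def] by blast

lemma adj_step: "T \<subseteq> Kedges G \<Longrightarrow> g \<in> carrier G \<Longrightarrow> (a, b) \<in> adj_rel T \<Longrightarrow>
   (a \<otimes> g, b \<otimes> g) \<in> adj_rel (edges_act G T g)"
proof -
  assume T: "T \<subseteq> Kedges G" and g: "g \<in> carrier G" and ab: "(a, b) \<in> adj_rel T"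
  then have e: "{a, b} \<in> T" "a \<noteq> b" unfolding adj_rel_def by auto
  then have ab': "a \<in> carrier G" "b \<in> carrier G" using T unfolding Kedges_def by auto
  have "edge_act G {a, b} g \<in> edges_act G T g" using e unfolding edges_act_def by auto
  then show ?thesis using e ab' g unfolding adj_rel_def by (auto simp: ea_pair)
qed

lemma adj_rtrancl: "T \<subseteq> Kedges G \<Longrightarrow> g \<in> carrier G \<Longrightarrow> (a, b) \<in> (adj_rel T)\<^sup>* \<Longrightarrow>
   (a \<otimes> g, b \<otimes> g) \<in> (adj_rel (edges_act G T g))\<^sup>*"
proof -
  assume T: "T \<subseteq> Kedges G" and g: "g \<in> carrier G" and ab: "(a, b) \<in> (adj_rel T)\<^sup>*"
  from ab show ?thesis
  proof (induction rule: rtrancl_induct)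
    case base then show ?case by simp
  next
    case (step y z)
    then show ?case using adj_step[OF T g, of y z] by (meson rtrancl.rtrancl_into_rtrancl)
  qed
qed

lemma conn_act: "spanning_connected G T \<Longrightarrow> g \<in> carrier G \<Longrightarrow> spanning_connected G (edges_act G T g)"
proof -
  assume sc: "spanning_connected G T" and g: "g \<in> carrier G"
  have T: "T \<subseteq> Kedges G" using sc unfolding spanning_connected_def by auto
  show ?thesis unfolding spanning_connected_def
  proof (intro conjI ballI)
    show "edges_act G T g \<subseteq> Kedges G" using T g by (rule eas_Kedges)
    fix x y assume xy: "x \<in> carrier G" "y \<in> carrier G"
    then have "(x \<otimes> inv g, y \<otimes> inv g) \<in> (adj_rel T)\<^sup>*" using sc g unfolding spanning_connected_def by auto
    from adj_rtrancl[OF T g this] show "(x, y) \<in> (adj_rel (edges_act G T g))\<^sup>*"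
      using xy g by (simp add: m_assoc)
  qed
qed

end

context group begin

lemma swap_eq:
  assumes c: "x \<in> carrier G" "y \<in> carrier G" "g \<in> carrier G" "g' \<in> carrier G"
    and e1: "x \<otimes> g = y \<otimes> g'" and e2: "y \<otimes> g = x \<otimes> g'"
  shows "x \<otimes> inv y = y \<otimes> inv x"
proof -
  have g': "g' = inv y \<otimes> x \<otimes> g" using e1 c by (simp add: m_assoc inv_solve_left)
  have "y \<otimes> g = (x \<otimes> inv y \<otimes> x) \<otimes> g" using e2 c by (simp add: g' m_assoc)
  then have "y = x \<otimes> inv y \<otimes> x" using c by simp
  then have "y \<otimes> inv x = (x \<otimes> inv y \<otimes> x) \<otimes> inv x" by simp
  also have "\<dots> = x \<otimes> inv y" using c by (simp add: m_assoc)
  finally show ?thesis by simp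
qed

lemma orb_eq: "Orb G (carrier G) f = (\<lambda>g. edge_act G f g) ` carrier G"
  unfolding Orb_def by simp

lemma rcosets_eq: "rcosets K = (\<lambda>g. K #> g) ` carrier G"
  unfolding RCOSETS_def by auto

lemma edge_class:
  assumes fin: "finite (carrier G)" and f: "f \<in> Kedges G"
  shows "(card (diffs G f) = 2 \<and> card (Orb G (carrier G) f) = order G) \<or>
         (card (diffs G f) = 1 \<and> 2 * card (Orb G (carrier G) f) = order G)"
proof -
  obtain x y where xy: "x \<in> carrier G" "y \<in> carrier G" "x \<noteq> y" "f = {x, y}"
    using f unfolding Kedges_iff by auto
  show ?thesis
  proof (cases "x \<otimes> inv y = y \<otimes> inv x")
    case False
    have d: "card (diffs G f) = 2" using False xy by (simp add: diffs_pair)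
    have "inj_on (\<lambda>g. edge_act G f g) (carrier G)"
    proof (rule inj_onI)
      fix g g' assume g: "g \<in> carrier G" "g' \<in> carrier G" and eq: "edge_act G f g = edge_act G f g'"
      then have "{x \<otimes> g, y \<otimes> g} = {x \<otimes> g', y \<otimes> g'}" using xy by (simp add: ea_pair)
      then have "x \<otimes> g = x \<otimes> g' \<or> (x \<otimes> g = y \<otimes> g' \<and> y \<otimes> g = x \<otimes> g')"
        by (auto simp: doubleton_eq_iff)
      then show "g = g'" using swap_eq[OF xy(1,2) g] False xy g by auto
    qed
    then have "card (Orb G (carrier G) f) = order G" unfolding orb_eq order_def by (rule card_image)
    then show ?thesis using d by simp
  next
    case True
    define s where "s = inv x \<otimes> y"
    have s: "s \<in> carrier G" using xy s_def by simp
    have xs: "x \<otimes> s = y" using xy by (simp add: s_def m_assoc[symmetric])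
    have s1: "s \<noteq> \<one>" using xs xy by auto
    have ss: "s \<otimes> s = \<one>"
    proof -
      have "s \<otimes> s = inv x \<otimes> (y \<otimes> inv x) \<otimes> y" using xy by (simp add: s_def m_assoc)
      also have "\<dots> = inv x \<otimes> (x \<otimes> inv y) \<otimes> y" using True by simp
      also have "\<dots> = \<one>" using xy by (simp add: m_assoc[symmetric])
      finally show ?thesis .
    qed
    have invs: "inv s = s" using ss s by (simp add: inv_equality)
    define K where "K = {\<one>, s}"
    have K: "subgroup K G"
      by (rule subgroupI) (use s invs ss in \<open>auto simp: K_def\<close>)
    have cK: "card K = 2" using s1 by (simp add: K_def)
    have Ksub: "K \<subseteq> carrier G" using s by (auto simp: K_def)
    have ea: "edge_act G f g = x <# (K #> g)" if g: "g \<in> carrier G" for g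
    proof -
      have "K #> g = {g, s \<otimes> g}" using g by (auto simp: K_def r_coset_def)
      then have "x <# (K #> g) = {x \<otimes> g, x \<otimes> (s \<otimes> g)}" by (auto simp: l_coset_def)
      also have "x \<otimes> (s \<otimes> g) = y \<otimes> g" using xs xy s g by (simp add: m_assoc[symmetric])
      finally show ?thesis using xy by (simp add: ea_pair)
    qed
    have orb: "Orb G (carrier G) f = (\<lambda>C. x <# C) ` (rcosets K)"
      unfolding orb_eq rcosets_eq image_image using ea by (intro image_cong) auto
    have "inj_on (\<lambda>C. x <# C) (rcosets K)"
    proof (rule inj_onI)
      fix C C' assume C: "C \<in> rcosets K" "C' \<in> rcosets K" and eq: "x <# C = x <# C'"
      have sub: "C \<subseteq> carrier G" "C' \<subseteq> carrier G"
        using C Ksub r_coset_subset_G unfolding rcosets_eq by blast+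
      have "inv x <# (x <# C) = inv x <# (x <# C')" using eq by simp
      then show "C = C'" using sub xy by (simp add: lcos_m_assoc lcos_mult_one)
    qed
    then have "card (Orb G (carrier G) f) = card (rcosets K)" unfolding orb by (rule card_image)
    moreover have "card (rcosets K) * card K = order G" by (rule lagrange[OF K])
    ultimately have "2 * card (Orb G (carrier G) f) = order G" using cK by simp
    moreover have "card (diffs G f) = 1" using True xy by (simp add: diffs_pair)
    ultimately show ?thesis by simp
  qed
qed

lemma long_iff:
  assumes fin: "finite (carrier G)" and f: "f \<in> Kedges G"
  shows "long_edge G f \<longleftrightarrow> card (diffs G f) = 2"
    and "short_edge G f \<longleftrightarrow> card (diffs G f) = 1"
proof -
  have pos: "order G > 0" using fin order_gt_0_iff_finite by blast
  show "long_edge G f \<longleftrightarrow> card (diffs G f) = 2"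
    "short_edge G f \<longleftrightarrow> card (diffs G f) = 1"
    using edge_class[OF fin f] pos unfolding long_edge_def short_edge_def by auto
qed

lemma size_phi:
  assumes fin: "finite (carrier G)" and f: "f \<in> Kedges G"
  shows "size (phi G f) = card (diffs G f)"
proof -
  have cf: "card f = 2" using f unfolding Kedges_def by auto
  have "card (diffs G f) = 2 \<or> card (diffs G f) = 1" using edge_class[OF fin f] by auto
  then show ?thesis using long_iff[OF fin f] cf unfolding phi_def by auto
qed

end

context group begin

lemma size_sum: "size (M :: 'c multiset) = sum (count M) (set_mset M)"
  by (simp add: size_multiset_overloaded_eq)

lemma size_filter_sum: "size (filter_mset P M) = sum (count M) {y \<in> set_mset M. P y}"
proof -
  have "size (filter_mset P M) = sum (count (filter_mset P M)) (set_mset (filter_mset P M))"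
    by (rule size_sum)
  also have "\<dots> = sum (count M) {y \<in> set_mset M. P y}"
    by (intro sum.cong) auto
  finally show ?thesis .
qed

lemma lcos_mem_iff: "subgroup H G \<Longrightarrow> x \<in> carrier G \<Longrightarrow> y \<in> carrier G \<Longrightarrow>
   y \<in> x <# H \<longleftrightarrow> inv x \<otimes> y \<in> H"
proof
  assume H: "subgroup H G" and xy: "x \<in> carrier G" "y \<in> carrier G"
  {
    assume "y \<in> x <# H"
    then obtain h where h: "h \<in> H" "y = x \<otimes> h" unfolding l_coset_def by auto
    then have "h \<in> carrier G" using H subgroup.subset by blast
    then show "inv x \<otimes> y \<in> H" using h xy by (simp add: m_assoc[symmetric])
  }
  assume "inv x \<otimes> y \<in> H"
  moreover have "y = x \<otimes> (inv x \<otimes> y)" using xy by (simp add: m_assoc[symmetric])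
  ultimately show "y \<in> x <# H" unfolding l_coset_def by blast
qed

lemma lcos_eq_iff: "subgroup H G \<Longrightarrow> x \<in> carrier G \<Longrightarrow> y \<in> carrier G \<Longrightarrow>
   y <# H = x <# H \<longleftrightarrow> y \<in> x <# H"
proof
  assume H: "subgroup H G" and xy: "x \<in> carrier G" "y \<in> carrier G"
  have yy: "y \<in> y <# H" unfolding l_coset_def using H subgroup.one_closed xy by force
  then show "y <# H = x <# H \<Longrightarrow> y \<in> x <# H" by simp
  assume "y \<in> x <# H"
  then obtain h where h: "h \<in> H" "y = x \<otimes> h" unfolding l_coset_def by auto
  then have hc: "h \<in> carrier G" using H subgroup.subset by blast
  have "y <# H = x <# (h <# H)" using h hc xy H by (simp add: lcos_m_assoc subgroup.subset)
  also have "h <# H = H" using coset_join3[OF hc H h(1)] .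
  finally show "y <# H = x <# H" .
qed

lemma inv_lcos: "subgroup H G \<Longrightarrow> x \<in> carrier G \<Longrightarrow> (\<lambda>z. inv z) ` (x <# H) = H #> inv x"
proof -
  assume H: "subgroup H G" and x: "x \<in> carrier G"
  have sub: "\<And>h. h \<in> H \<Longrightarrow> h \<in> carrier G" using H subgroup.subset by blast
  show ?thesis
  proof
    show "(\<lambda>z. inv z) ` (x <# H) \<subseteq> H #> inv x"
    proof
      fix z assume "z \<in> (\<lambda>z. inv z) ` (x <# H)"
      then obtain h where h: "h \<in> H" "z = inv (x \<otimes> h)" unfolding l_coset_def by auto
      then have "z = inv h \<otimes> inv x" using sub x by (simp add: inv_mult_group)
      then show "z \<in> H #> inv x" using h H unfolding r_coset_def by (auto intro: subgroup.m_inv_closed)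
    qed
    show "H #> inv x \<subseteq> (\<lambda>z. inv z) ` (x <# H)"
    proof
      fix z assume "z \<in> H #> inv x"
      then obtain h where h: "h \<in> H" "z = h \<otimes> inv x" unfolding r_coset_def by auto
      then have "z = inv (x \<otimes> inv h)" using sub x by (simp add: inv_mult_group)
      moreover have "x \<otimes> inv h \<in> x <# H" using h H unfolding l_coset_def by (auto intro: subgroup.m_inv_closed)
      ultimately show "z \<in> (\<lambda>z. inv z) ` (x <# H)" by blast
    qed
  qed
qed

lemma card_lcosets: assumes fin: "finite (carrier G)" and H: "subgroup H G"
  shows "card ((\<lambda>x. x <# H) ` carrier G) = card (rcosets H)"
proof -
  let ?LC = "(\<lambda>x. x <# H) ` carrier G"
  have lsub: "\<And>C. C \<in> ?LC \<Longrightarrow> C \<subseteq> carrier G"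
    using H l_coset_subset_G subgroup.subset by blast
  have inj: "inj_on (\<lambda>C. (\<lambda>z. inv z) ` C) ?LC"
  proof (rule inj_onI)
    fix C C' assume C: "C \<in> ?LC" "C' \<in> ?LC" and eq: "(\<lambda>z. inv z) ` C = (\<lambda>z. inv z) ` C'"
    have "(\<lambda>z. inv z) ` ((\<lambda>z. inv z) ` C) = (\<lambda>z. inv z) ` ((\<lambda>z. inv z) ` C')" using eq by simp
    moreover have "(\<lambda>z. inv z) ` ((\<lambda>z. inv z) ` D) = D" if "D \<subseteq> carrier G" for D
      using that unfolding image_image by (auto simp: subset_iff)
    ultimately show "C = C'" using lsub C by metis
  qed
  have "(\<lambda>C. (\<lambda>z. inv z) ` C) ` ?LC = (\<lambda>x. H #> inv x) ` carrier G"
    unfolding image_image using inv_lcos[OF H] by auto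
  also have "\<dots> = (\<lambda>x. H #> x) ` ((\<lambda>x. inv x) ` carrier G)" by (simp add: image_image)
  also have "(\<lambda>x. inv x) ` carrier G = carrier G"
    by (auto simp: image_iff) (metis inv_closed inv_inv)
  also have "(\<lambda>x. H #> x) ` carrier G = rcosets H" by (simp add: rcosets_eq)
  finally show ?thesis using card_image[OF inj] by simp
qed

lemma transversal_size:
  assumes fin: "finite (carrier G)" and H: "subgroup H G" and T: "left_transversal G H T"
  shows "size T = card (rcosets H)"
proof -
  let ?LC = "(\<lambda>x. x <# H) ` carrier G"
  let ?S = "set_mset T"
  have S: "?S \<subseteq> carrier G" using T unfolding left_transversal_def by auto
  have fS: "finite ?S" by simp
  have fLC: "finite ?LC" using fin by simp
  have "sum (\<lambda>C. sum (count T) {y. y \<in> ?S \<and> y <# H = C}) ?LC = sum (count T) ?S"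
    by (rule sum.group[OF fS fLC]) (use S in auto)
  moreover have "sum (count T) {y. y \<in> ?S \<and> y <# H = C} = 1" if C: "C \<in> ?LC" for C
  proof -
    obtain x where x: "x \<in> carrier G" "C = x <# H" using C by auto
    have "{y. y \<in> ?S \<and> y <# H = C} = {y \<in> ?S. y \<in> x <# H}"
      using S x lcos_eq_iff[OF H] by auto
    then have "sum (count T) {y. y \<in> ?S \<and> y <# H = C} = size (filter_mset (\<lambda>y. y \<in> x <# H) T)"
      by (simp add: size_filter_sum)
    also have "\<dots> = 1" using T x unfolding left_transversal_def by auto
    finally show ?thesis .
  qed
  ultimately have "size T = card ?LC" by (simp add: size_sum)
  then show ?thesis using card_lcosets[OF fin H] by simp
qed

end

lemma adj_sym: "(a, b) \<in> adj_rel T \<Longrightarrow> (b, a) \<in> adj_rel T"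
  unfolding adj_rel_def by (auto simp: insert_commute)

lemma adj_rtrancl_sym: "(a, b) \<in> (adj_rel T)\<^sup>* \<Longrightarrow> (b, a) \<in> (adj_rel T)\<^sup>*"
proof -
  have "(adj_rel T)\<inverse> = adj_rel T" using adj_sym by auto
  moreover assume "(a, b) \<in> (adj_rel T)\<^sup>*"
  ultimately show ?thesis by (metis converseI rtrancl_converseD)
qed

lemma conn_card:
  assumes fV: "finite V" and T: "T \<subseteq> {e. e \<subseteq> V \<and> card e = 2}"
    and conn: "\<forall>x\<in>V. \<forall>y\<in>V. (x, y) \<in> (adj_rel T)\<^sup>*" and r: "r \<in> V"
  shows "card V \<le> card T + 1"
proof -
  let ?R = "adj_rel T"
  define dist where "dist v = (LEAST k. (r, v) \<in> ?R ^^ k)" for v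
  have ex: "\<exists>k. (r, v) \<in> ?R ^^ k" if "v \<in> V" for v
    using conn r that by (simp add: rtrancl_power)
  have dl: "(r, v) \<in> ?R ^^ dist v" if "v \<in> V" for v
    unfolding dist_def using ex[OF that] by (rule LeastI_ex)
  have par_ex: "\<exists>u. (r, u) \<in> ?R ^^ (dist v - 1) \<and> (u, v) \<in> ?R" if v: "v \<in> V" "v \<noteq> r" for v
  proof -
    have "dist v \<noteq> 0" using dl[OF v(1)] v(2) by (metis relpow_0_E)
    then obtain m where m: "dist v = Suc m" by (cases "dist v") auto
    then have "(r, v) \<in> ?R ^^ m O ?R" using dl[OF v(1)] by simp
    then show ?thesis using m by auto
  qed
  define par where "par v = (SOME u. (r, u) \<in> ?R ^^ (dist v - 1) \<and> (u, v) \<in> ?R)" for v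
  have par: "(r, par v) \<in> ?R ^^ (dist v - 1) \<and> (par v, v) \<in> ?R" if "v \<in> V" "v \<noteq> r" for v
    unfolding par_def using par_ex[OF that] by (rule someI_ex)
  have dpar: "dist (par v) < dist v" if v: "v \<in> V" "v \<noteq> r" for v
  proof -
    have "dist (par v) \<le> dist v - 1" unfolding dist_def[of "par v"]
      by (rule Least_le) (use par[OF v] in simp)
    moreover have "dist v \<noteq> 0" using dl[OF v(1)] v(2) by (metis relpow_0_E)
    ultimately show ?thesis by simp
  qed
  define phi where "phi v = {par v, v}" for v
  have inj: "inj_on phi (V - {r})"
  proof (rule inj_onI)
    fix v w assume v: "v \<in> V - {r}" and w: "w \<in> V - {r}" and eq: "phi v = phi w"
    show "v = w"
    proof (rule ccontr)
      assume "v \<noteq> w"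
      then have "par v = w" "par w = v" using eq unfolding phi_def by (auto simp: doubleton_eq_iff)
      then show False using dpar[of v] dpar[of w] v w by auto
    qed
  qed
  have img: "phi ` (V - {r}) \<subseteq> T"
    using par unfolding phi_def adj_rel_def by auto
  have fT: "finite T"
  proof (rule finite_subset[OF _ finite_Pow_iff[THEN iffD2, OF fV]])
    show "T \<subseteq> Pow V" using T by auto
  qed
  have "card (V - {r}) \<le> card T" by (rule card_inj_on_le[OF inj img fT])
  then show ?thesis using r fV by simp
qed

lemma cycle_conn:
  assumes T: "T \<subseteq> {e. e \<subseteq> V \<and> card e = 2}"
    and conn: "\<forall>x\<in>V. \<forall>y\<in>V. (x, y) \<in> (adj_rel T)\<^sup>*" and cyc: "has_cycle T"
  shows "\<exists>e0\<in>T. \<forall>x\<in>V. \<forall>y\<in>V. (x, y) \<in> (adj_rel (T - {e0}))\<^sup>*"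
proof -
  obtain vs where vs: "length vs \<ge> 3" "distinct vs" "\<forall>i < length vs - 1. {vs ! i, vs ! (i + 1)} \<in> T"
    "{last vs, hd vs} \<in> T" using cyc unfolding has_cycle_def by auto
  define k where "k = length vs"
  define e0 where "e0 = {last vs, hd vs}"
  let ?T' = "T - {e0}"
  have ne: "vs \<noteq> []" using vs(1) by auto
  have last: "last vs = vs ! (k - 1)" using ne by (simp add: k_def last_conv_nth)
  have hd: "hd vs = vs ! 0" using ne by (simp add: hd_conv_nth)
  have path: "(hd vs, vs ! i) \<in> (adj_rel ?T')\<^sup>*" if "i < k" for i
    using that
  proof (induction i)
    case 0 then show ?case by (simp add: hd)
  next
    case (Suc i)
    have i: "i < length vs - 1" using Suc.prems k_def by simp
    have inT: "{vs ! i, vs ! (i + 1)} \<in> T" using vs(3) i by auto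
    have neq: "vs ! i \<noteq> vs ! (i + 1)" using vs(2) Suc.prems k_def by (simp add: nth_eq_iff_index_eq)
    have "{vs ! i, vs ! (i + 1)} \<noteq> e0"
    proof
      assume "{vs ! i, vs ! (i + 1)} = e0"
      then have D: "(vs ! i = vs ! (k - 1) \<and> vs ! (i + 1) = vs ! 0) \<or> (vs ! i = vs ! 0 \<and> vs ! (i + 1) = vs ! (k - 1))"
        unfolding e0_def last hd by (auto simp: doubleton_eq_iff)
      have L: "i < length vs" "0 < length vs" "i + 1 < length vs" "k - 1 < length vs"
        using Suc.prems k_def by auto
      have A: "vs ! a = vs ! b \<Longrightarrow> a < length vs \<Longrightarrow> b < length vs \<Longrightarrow> a = b" for a b
        using nth_eq_iff_index_eq[OF vs(2), of a b] by simp
      from D show False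
      proof (elim disjE conjE)
        assume h: "vs ! i = vs ! (k - 1)" "vs ! (i + 1) = vs ! 0"
        have "i = k - 1" by (rule A[OF h(1) L(1) L(4)])
        then show False using Suc.prems by linarith
      next
        assume h: "vs ! i = vs ! 0" "vs ! (i + 1) = vs ! (k - 1)"
        have "i = 0" by (rule A[OF h(1) L(1) L(2)])
        moreover have "i + 1 = k - 1" by (rule A[OF h(2) L(3) L(4)])
        ultimately have "k = 2" by linarith
        then show False using vs(1) k_def by linarith
      qed
    qed
    then have "(vs ! i, vs ! Suc i) \<in> adj_rel ?T'" using inT neq unfolding adj_rel_def by auto
    with Suc show ?case by (meson Suc_lessD rtrancl.rtrancl_into_rtrancl)
  qed
  have hl: "(hd vs, last vs) \<in> (adj_rel ?T')\<^sup>*" using path[of "k - 1"] vs(1) k_def last by simp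
  have sub: "adj_rel T \<subseteq> (adj_rel ?T')\<^sup>*"
  proof
    fix p assume p: "p \<in> adj_rel T"
    obtain a b where ab: "p = (a, b)" by (cases p)
    show "p \<in> (adj_rel ?T')\<^sup>*"
    proof (cases "{a, b} = e0")
      case False
      then show ?thesis using p ab unfolding adj_rel_def by auto
    next
      case True
      then have "(a = last vs \<and> b = hd vs) \<or> (a = hd vs \<and> b = last vs)"
        unfolding e0_def by (auto simp: doubleton_eq_iff)
      then show ?thesis using hl adj_rtrancl_sym[OF hl] ab by auto
    qed
  qed
  have "(adj_rel T)\<^sup>* \<subseteq> (adj_rel ?T')\<^sup>*" using sub by (rule rtrancl_subset_rtrancl)
  then show ?thesis using conn vs(4) unfolding e0_def by blast
qed

lemma no_cycle:
  assumes fV: "finite V" and T: "T \<subseteq> {e. e \<subseteq> V \<and> card e = 2}"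
    and conn: "\<forall>x\<in>V. \<forall>y\<in>V. (x, y) \<in> (adj_rel T)\<^sup>*" and r: "r \<in> V"
    and c: "card T + 1 = card V"
  shows "\<not> has_cycle T"
proof
  assume "has_cycle T"
  then obtain e0 where e0: "e0 \<in> T" and conn': "\<forall>x\<in>V. \<forall>y\<in>V. (x, y) \<in> (adj_rel (T - {e0}))\<^sup>*"
    using cycle_conn[OF T conn] by blast
  have "card V \<le> card (T - {e0}) + 1" using conn_card[OF fV _ conn' r] T by blast
  moreover have "finite T"
    by (rule finite_subset[of _ "Pow V"]) (use T fV in auto)
  moreover have "card T > 0" using e0 \<open>finite T\<close> card_gt_0_iff by blast
  ultimately show False using c e0 by (simp add: card_Diff_singleton)
qed

lemma size_msum: "size (sum f A :: 'c multiset) = sum (\<lambda>a. size (f a)) A"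
  by (induct A rule: infinite_finite_induct) simp_all

lemma three_two: "A \<in> {a, b} \<Longrightarrow> B \<in> {a, b} \<Longrightarrow> C \<in> {a, b} \<Longrightarrow> B \<noteq> A \<Longrightarrow> C \<noteq> A \<Longrightarrow> C = B"
  by auto

locale L12 = group G for G :: "('a, 'b) monoid_scheme" (structure) +
  fixes n r :: nat and H :: "'a set" and j :: 'a and hs :: "'a set"
    and S :: "nat \<Rightarrow> 'a set set" and Hs :: "nat \<Rightarrow> 'a set"
    and e e1 e2 :: "'a set" and Rs :: "nat \<Rightarrow> 'a set set"
  assumes fin: "finite (carrier G)"
    and n_gt: "n > 2" and ord: "order G = 2 * n"
    and H_sub: "subgroup H G"
    and H_idx: "card (rcosets H) = 2"
    and j_inv: "j \<in> H" "j \<noteq> \<one>" "j \<otimes> j = \<one>"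
    and j_unique: "\<forall>x\<in>H. x \<noteq> \<one> \<and> x \<otimes> x = \<one> \<longrightarrow> x = j"
    and hs_sub: "hs \<subseteq> H"
    and hs_reps: "\<forall>h\<in>H. card (hs \<inter> (h <# {\<one>, j})) = 1"
    and st: "starter G r S Hs"
    and S1: "S 1 = {e}" and de: "diffs G e = {j}"
    and R1: "\<forall>i\<in>{2..r}. Rs i \<subseteq> \<Union>(factor_orbit G S Hs i)
              \<and> card (Rs i) = card (rcosets (Hs i))
              \<and> (\<forall>F\<in>factor_orbit G S Hs i. card (Rs i \<inter> F) = 1)
              \<and> set_mset (dS G (Rs i)) = set_mset (dS G (S i))"
    and R2_long: "\<forall>i\<in>{2..r}. \<forall>l\<in>Rs i. long_edge G l \<longrightarrow>
              (\<exists>!l'. l' \<in> Rs i \<and> diffs G l = diffs G l' \<and> l' \<notin> Orb G H l)"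
    and R2_short: "\<forall>i\<in>{2..r}. \<forall>l\<in>Rs i. short_edge G l \<longrightarrow>
              (\<forall>l'\<in>Rs i. diffs G l' = diffs G l \<longrightarrow> l' = l)"
    and e12: "e1 \<in> Orb G (carrier G) e" "e2 \<in> Orb G (carrier G) e" "e1 \<noteq> e2"
             "Orb G H e1 \<inter> Orb G H e2 = {}"
    and conn1: "spanning_connected G ((\<Union>i\<in>{2..r}. Rs i) \<union> {e1})"
    and conn2: "spanning_connected G ((\<Union>i\<in>{2..r}. Rs i) \<union> {e2})"
begin

definition DD :: "nat \<Rightarrow> 'a set" where "DD i = set_mset (dS G (S i))"

lemma jc: "j \<in> carrier G" using j_inv(1) H_sub subgroup.subset by blast

lemma Hc: "H \<subseteq> carrier G" using H_sub subgroup.subset by blast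

lemma Sk: "i \<in> {1..r} \<Longrightarrow> S i \<subseteq> Kedges G" using st unfolding starter_def by auto
lemma Hsg: "i \<in> {1..r} \<Longrightarrow> subgroup (Hs i) G" using st unfolding starter_def by auto

lemma finK: "finite (Kedges G)"
  by (rule finite_subset[of _ "Pow (carrier G)"]) (use fin in \<open>auto simp: Kedges_def\<close>)

lemma diffs_fin: "f \<in> Kedges G \<Longrightarrow> finite (diffs G f)"
  unfolding Kedges_iff by (auto simp: diffs_pair)

lemma set_dS: "T \<subseteq> Kedges G \<Longrightarrow> set_mset (dS G T) = (\<Union>f\<in>T. diffs G f)"
proof -
  assume T: "T \<subseteq> Kedges G"
  then have "finite T" using finK finite_subset by blast
  then show ?thesis unfolding dS_def using T diffs_fin by (simp add: set_mset_sum subset_iff)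
qed

lemma r_ge1: "1 \<le> r"
proof (rule ccontr)
  assume "\<not> 1 \<le> r"
  then have "{1..r} = {}" by auto
  then have "mset_set (carrier G - {\<one>}) = {#}" using st unfolding starter_def by simp
  then have "carrier G - {\<one>} = {}" using fin by (simp add: mset_set_empty_iff)
  then have "j = \<one>" using jc by auto
  then show False using j_inv by simp
qed

lemma count_le1: "i \<in> {1..r} \<Longrightarrow> k \<in> {1..r} \<Longrightarrow> i \<noteq> k \<Longrightarrow>
   count (dS G (S i)) x + count (dS G (S k)) x \<le> 1"
proof -
  assume ik: "i \<in> {1..r}" "k \<in> {1..r}" "i \<noteq> k"
  have "count (\<Sum>i\<in>{1..r}. dS G (S i)) x \<le> 1"
    using st unfolding starter_def by (simp add: count_mset_set')
  moreover have "count (\<Sum>i\<in>{1..r}. dS G (S i)) x = (\<Sum>a\<in>{1..r}. count (dS G (S a)) x)"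
    by (simp add: count_sum)
  moreover have "(\<Sum>a\<in>{1..r}. count (dS G (S a)) x) \<ge> (\<Sum>a\<in>{i, k}. count (dS G (S a)) x)"
    by (rule sum_mono2) (use ik in auto)
  ultimately show ?thesis using ik by simp
qed

lemma count_le1': "i \<in> {1..r} \<Longrightarrow> count (dS G (S i)) x \<le> 1"
proof -
  assume i: "i \<in> {1..r}"
  have "count (\<Sum>i\<in>{1..r}. dS G (S i)) x \<le> 1"
    using st unfolding starter_def by (simp add: count_mset_set')
  moreover have "count (\<Sum>i\<in>{1..r}. dS G (S i)) x = (\<Sum>a\<in>{1..r}. count (dS G (S a)) x)"
    by (simp add: count_sum)
  moreover have "(\<Sum>a\<in>{1..r}. count (dS G (S a)) x) \<ge> (\<Sum>a\<in>{i}. count (dS G (S a)) x)"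
    by (rule sum_mono2) (use i in auto)
  ultimately show ?thesis using i by simp
qed

lemma DD_disj: "i \<in> {1..r} \<Longrightarrow> k \<in> {1..r} \<Longrightarrow> i \<noteq> k \<Longrightarrow> DD i \<inter> DD k = {}"
proof -
  assume ik: "i \<in> {1..r}" "k \<in> {1..r}" "i \<noteq> k"
  show ?thesis
  proof (rule ccontr)
    assume "DD i \<inter> DD k \<noteq> {}"
    then obtain x where x: "x \<in> DD i" "x \<in> DD k" by blast
    then have "count (dS G (S i)) x > 0" "count (dS G (S k)) x > 0" unfolding DD_def by auto
    then show False using count_le1[OF ik, of x] by linarith
  qed
qed

lemma eK: "e \<in> Kedges G" using Sk[of 1] S1 r_ge1 by auto

lemma DD1: "DD 1 = {j}"
  unfolding DD_def using set_dS[of "S 1"] S1 eK de by simp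

lemma jnot: "i \<in> {2..r} \<Longrightarrow> j \<notin> DD i"
  using DD_disj[of 1 i] DD1 r_ge1 by auto

lemma factor_edges: "i \<in> {1..r} \<Longrightarrow> F \<in> factor_orbit G S Hs i \<Longrightarrow> f \<in> F \<Longrightarrow>
   f \<in> Kedges G \<and> diffs G f \<subseteq> DD i"
proof -
  assume i: "i \<in> {1..r}" and F: "F \<in> factor_orbit G S Hs i" and f: "f \<in> F"
  obtain g where g: "g \<in> carrier G" "F = edges_act G (base_factor G S Hs i) g"
    using F unfolding factor_orbit_def by auto
  obtain f1 where f1: "f1 \<in> base_factor G S Hs i" "f = edge_act G f1 g"
    using f g unfolding edges_act_def by auto
  obtain f0 h where f0: "f0 \<in> S i" "h \<in> Hs i" "f1 = edge_act G f0 h"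
    using f1 unfolding base_factor_def Orb_def by auto
  have f0K: "f0 \<in> Kedges G" using f0 Sk[OF i] by auto
  have hc: "h \<in> carrier G" using f0(2) Hsg[OF i] subgroup.subset by blast
  have f1K: "f1 \<in> Kedges G" using f0K hc f0(3) ea_Kedges by simp
  have "diffs G f = diffs G f0" using f1 f0 f1K f0K hc g ea_diffs by simp
  moreover have "diffs G f0 \<subseteq> DD i" unfolding DD_def using set_dS[OF Sk[OF i]] f0 by auto
  ultimately show ?thesis using f1K g f1 ea_Kedges by simp
qed

lemma R_edges: "i \<in> {2..r} \<Longrightarrow> l \<in> Rs i \<Longrightarrow> l \<in> Kedges G \<and> diffs G l \<subseteq> DD i \<and> diffs G l \<noteq> {} \<and> j \<notin> diffs G l"
proof -
  assume i: "i \<in> {2..r}" and l: "l \<in> Rs i"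
  then obtain F where "F \<in> factor_orbit G S Hs i" "l \<in> F" using R1 by blast
  then have "l \<in> Kedges G \<and> diffs G l \<subseteq> DD i" using factor_edges[of i F l] i by auto
  then show ?thesis using jnot[OF i] diffs_nonempty by auto
qed

lemma Orb_e_edges: "f \<in> Orb G (carrier G) e \<Longrightarrow> f \<in> Kedges G \<and> diffs G f = {j}"
  unfolding Orb_def using eK ea_Kedges ea_diffs de by auto

lemma central: "g \<in> carrier G \<Longrightarrow> j \<otimes> g = g \<otimes> j"
proof -
  assume g: "g \<in> carrier G"
  define z where "z = inv g \<otimes> j \<otimes> g"
  have zc: "z \<in> carrier G" using g jc z_def by simp
  have zH: "z \<in> H"
  proof (cases "g \<in> H")
    case True
    then show ?thesis unfolding z_def using H_sub j_inv(1)
      by (simp add: subgroup.m_closed subgroup.m_inv_closed)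
  next
    case False
    show ?thesis
    proof (rule ccontr)
      assume zn: "z \<notin> H"
      have "H \<in> rcosets H" using subgroup.subgroup_in_rcosets[OF H_sub is_group] .
      moreover have "H #> g \<in> rcosets H" using g Hc by (simp add: rcosetsI)
      moreover have "H #> z \<in> rcosets H" using zc Hc by (simp add: rcosetsI)
      moreover have "H #> g \<noteq> H"
      proof
        assume "H #> g = H" then show False using rcos_self[OF g H_sub] False by simp
      qed
      moreover have "H #> z \<noteq> H"
      proof
        assume "H #> z = H" then show False using rcos_self[OF zc H_sub] zn by simp
      qed
      moreover obtain a b where ab: "rcosets H = {a, b}"
        using H_idx[unfolded card_2_iff] by (elim exE conjE) (rule that)
      ultimately have "H #> z = H #> g" using three_two[of H a b "H #> g" "H #> z"] by simp
      then have "z \<in> H #> g" using rcos_self[OF zc H_sub] by simp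
      then have "z \<otimes> inv g \<in> H" using subgroup.rcos_module_imp[OF H_sub is_group g] by simp
      moreover have "z \<otimes> inv g = inv g \<otimes> j" using g jc by (simp add: z_def m_assoc)
      ultimately have "inv g \<otimes> j \<otimes> inv j \<in> H" using H_sub j_inv(1)
        by (simp add: subgroup.m_closed subgroup.m_inv_closed)
      then have "inv g \<in> H" using g jc by (simp add: m_assoc)
      then have "inv (inv g) \<in> H" using H_sub by (simp add: subgroup.m_inv_closed)
      then show False using False g by simp
    qed
  qed
  have "z \<otimes> z = \<one>"
  proof -
    have "z \<otimes> z = inv g \<otimes> (j \<otimes> ((g \<otimes> inv g) \<otimes> (j \<otimes> g)))"
      unfolding z_def using g jc by (simp only: m_assoc m_closed inv_closed)
    also have "\<dots> = inv g \<otimes> ((j \<otimes> j) \<otimes> g)"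
      using g jc by (simp only: r_inv l_one m_assoc m_closed)
    also have "\<dots> = \<one>" using g j_inv(3) by (simp only: l_one l_inv)
    finally show ?thesis .
  qed
  moreover have "z \<noteq> \<one>"
  proof
    assume "z = \<one>"
    then have "inv g \<otimes> (j \<otimes> g) = \<one>" unfolding z_def using g jc by (simp only: m_assoc inv_closed)
    moreover have "inv g \<otimes> (j \<otimes> g) = \<one> \<longleftrightarrow> j \<otimes> g = g \<otimes> \<one>"
      by (rule inv_solve_left') (use g jc in simp_all)
    ultimately have "j \<otimes> g = g \<otimes> \<one>" by blast
    then have "j \<otimes> g = g" using g by simp
    then show False using g jc j_inv(2) by simp
  qed
  ultimately have "z = j" using j_unique zH by simp
  then have "inv g \<otimes> (j \<otimes> g) = j" unfolding z_def using g jc by (simp only: m_assoc inv_closed)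
  moreover have "inv g \<otimes> (j \<otimes> g) = j \<longleftrightarrow> j \<otimes> g = g \<otimes> j"
    by (rule inv_solve_left') (use g jc in simp_all)
  ultimately show ?thesis by blast
qed

end

context L12 begin

lemma diffs_j: "f \<in> Kedges G \<Longrightarrow> diffs G f = {j} \<Longrightarrow> \<exists>y. y \<in> carrier G \<and> f = {j \<otimes> y, y}"
proof -
  assume f: "f \<in> Kedges G" and d: "diffs G f = {j}"
  obtain x y where xy: "x \<in> carrier G" "y \<in> carrier G" "x \<noteq> y" "f = {x, y}"
    using f unfolding Kedges_iff by auto
  have "x \<otimes> inv y = j" using d xy by (auto simp: diffs_pair doubleton_eq_iff)
  moreover have "j = x \<otimes> inv y \<longleftrightarrow> x = j \<otimes> y" by (rule inv_solve_right) (use xy jc in simp_all)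
  ultimately have "x = j \<otimes> y" by auto
  then show ?thesis using xy by auto
qed

lemma jj: "j \<otimes> (j \<otimes> y) = y" if "y \<in> carrier G" for y
  using that jc j_inv(3) by (simp add: m_assoc[symmetric])

lemma jstab: "f \<in> Kedges G \<Longrightarrow> diffs G f = {j} \<Longrightarrow> c \<in> carrier G \<Longrightarrow> edge_act G f c = f \<Longrightarrow>
   c = \<one> \<or> c = j"
proof -
  assume f: "f \<in> Kedges G" and d: "diffs G f = {j}" and c: "c \<in> carrier G" and eq: "edge_act G f c = f"
  obtain y where y: "y \<in> carrier G" "f = {j \<otimes> y, y}" using diffs_j[OF f d] by auto
  have "{j \<otimes> y \<otimes> c, y \<otimes> c} = {j \<otimes> y, y}" using eq y by (simp add: ea_pair)
  then have "y \<otimes> c = y \<or> y \<otimes> c = j \<otimes> y" by (auto simp: doubleton_eq_iff)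
  moreover have "j \<otimes> y = y \<otimes> j" using central[OF y(1)] .
  ultimately have "y \<otimes> c = y \<otimes> \<one> \<or> y \<otimes> c = y \<otimes> j" using y by simp
  then show ?thesis using y c jc by simp
qed

lemma jfix: "f \<in> Kedges G \<Longrightarrow> diffs G f = {j} \<Longrightarrow> edge_act G f j = f"
proof -
  assume f: "f \<in> Kedges G" and d: "diffs G f = {j}"
  obtain y where y: "y \<in> carrier G" "f = {j \<otimes> y, y}" using diffs_j[OF f d] by auto
  have "j \<otimes> y \<otimes> j = y" using y jc central[OF y(1)] j_inv(3) by (simp add: m_assoc)
  then show ?thesis using y central[OF y(1)] j_inv(3) by (auto simp: ea_pair)
qed

lemma Rstab: "i \<in> {2..r} \<Longrightarrow> l \<in> Rs i \<Longrightarrow> c \<in> H \<Longrightarrow> edge_act G l c = l \<Longrightarrow> c = \<one>"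
proof (rule ccontr)
  assume i: "i \<in> {2..r}" and l: "l \<in> Rs i" and cH: "c \<in> H" and eq: "edge_act G l c = l" and c1: "c \<noteq> \<one>"
  have c: "c \<in> carrier G" using cH Hc by auto
  have lR: "l \<in> Kedges G" "j \<notin> diffs G l" using R_edges[OF i l] by auto
  obtain x y where xy: "x \<in> carrier G" "y \<in> carrier G" "x \<noteq> y" "l = {x, y}"
    using lR unfolding Kedges_iff by auto
  have "{x \<otimes> c, y \<otimes> c} = {x, y}" using eq xy by (simp add: ea_pair)
  moreover have "x \<otimes> c \<noteq> x" using c1 c xy by simp
  ultimately have xc: "x \<otimes> c = y" and yc: "y \<otimes> c = x" by (auto simp: doubleton_eq_iff)
  have "x \<otimes> (c \<otimes> c) = x" using xc yc c xy by (simp add: m_assoc[symmetric])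
  then have "c \<otimes> c = \<one>" using xy c by simp
  then have cj: "c = j" using j_unique cH c1 by simp
  have "y = j \<otimes> x" using xc cj central[OF xy(1)] by simp
  then have "x = j \<otimes> y" using xy jj by simp
  moreover have "j = x \<otimes> inv y \<longleftrightarrow> x = j \<otimes> y" by (rule inv_solve_right) (use xy jc in simp_all)
  ultimately have "j = x \<otimes> inv y" by simp
  then have "j \<in> diffs G l" using xy by (simp add: diffs_pair)
  then show False using lR by simp
qed

lemma Hs1: "Hs 1 = carrier G"
proof -
  have r1: "1 \<in> {1..r}" using r_ge1 by simp
  have "card (diffs G e) = 1" using de by simp
  then have nl: "\<not> long_edge G e" using long_iff(1)[OF fin eK] by simp
  define x0 where "x0 = (SOME x. x \<in> e)"
  have "\<exists>x. x \<in> e" using eK unfolding Kedges_iff by auto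
  then have x0e: "x0 \<in> e" unfolding x0_def by (rule someI_ex)
  then have x0: "x0 \<in> carrier G" using eK unfolding Kedges_def by auto
  have "phiS G (S 1) = {#x0#}" unfolding phiS_def S1 phi_def using nl x0_def by simp
  then have T: "left_transversal G (Hs 1) {#x0#}" using st r1 unfolding starter_def by metis
  have H1: "subgroup (Hs 1) G" using Hsg[OF r1] .
  show ?thesis
  proof
    show "Hs 1 \<subseteq> carrier G" using H1 subgroup.subset by blast
    show "carrier G \<subseteq> Hs 1"
    proof
      fix g assume g: "g \<in> carrier G"
      define y where "y = x0 \<otimes> inv g"
      have yc: "y \<in> carrier G" using x0 g y_def by simp
      have "size (filter_mset (\<lambda>z. z \<in> y <# Hs 1) {#x0#}) = 1" using T yc unfolding left_transversal_def by blast
      then have "x0 \<in> y <# Hs 1" by (cases "x0 \<in> y <# Hs 1") auto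
      then have "inv y \<otimes> x0 \<in> Hs 1" using lcos_mem_iff[OF H1 yc x0] by simp
      moreover have "inv y \<otimes> x0 = g" unfolding y_def using x0 g
        by (simp add: inv_mult_group m_assoc)
      ultimately show "g \<in> Hs 1" by simp
    qed
  qed
qed

lemma carrier_rmult: "g \<in> carrier G \<Longrightarrow> (\<lambda>h. h \<otimes> g) ` carrier G = carrier G"
proof
  assume g: "g \<in> carrier G"
  show "(\<lambda>h. h \<otimes> g) ` carrier G \<subseteq> carrier G" using g by auto
  show "carrier G \<subseteq> (\<lambda>h. h \<otimes> g) ` carrier G"
  proof
    fix x assume x: "x \<in> carrier G"
    then have "x = (x \<otimes> inv g) \<otimes> g" using g by (simp add: m_assoc)
    moreover have "x \<otimes> inv g \<in> carrier G" using x g by simp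
    ultimately show "x \<in> (\<lambda>h. h \<otimes> g) ` carrier G" by blast
  qed
qed

lemma Orb_act: "g \<in> carrier G \<Longrightarrow> edges_act G (Orb G (carrier G) e) g = Orb G (carrier G) e"
proof -
  assume g: "g \<in> carrier G"
  have eG: "e \<subseteq> carrier G" using eK unfolding Kedges_def by auto
  have "edges_act G (Orb G (carrier G) e) g = (\<lambda>h. edge_act G e (h \<otimes> g)) ` carrier G"
    unfolding edges_act_def Orb_def image_image using eG g by (intro image_cong) (auto simp: ea_comp)
  also have "\<dots> = (\<lambda>h. edge_act G e h) ` ((\<lambda>h. h \<otimes> g) ` carrier G)" by (simp add: image_image)
  also have "\<dots> = Orb G (carrier G) e" unfolding carrier_rmult[OF g] Orb_def ..
  finally show ?thesis .
qed

lemma factor1: "F \<in> factor_orbit G S Hs 1 \<Longrightarrow> F = Orb G (carrier G) e"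
proof -
  assume "F \<in> factor_orbit G S Hs 1"
  then obtain g where g: "g \<in> carrier G" "F = edges_act G (base_factor G S Hs 1) g"
    unfolding factor_orbit_def by auto
  have "base_factor G S Hs 1 = Orb G (carrier G) e" unfolding base_factor_def S1 Hs1 by simp
  then show ?thesis using g Orb_act by simp
qed

end

context L12 begin

lemma Rs_K: "i \<in> {2..r} \<Longrightarrow> Rs i \<subseteq> Kedges G" using R_edges by blast

lemma card_Rs: "i \<in> {2..r} \<Longrightarrow> card (Rs i) = card (DD i)"
proof -
  assume i2: "i \<in> {2..r}"
  then have i: "i \<in> {1..r}" by auto
  have SK: "S i \<subseteq> Kedges G" using Sk[OF i] .
  have "card (Rs i) = card (rcosets (Hs i))" using R1 i2 by blast
  also have "\<dots> = size (phiS G (S i))"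
    using transversal_size[OF fin Hsg[OF i]] st i unfolding starter_def by metis
  also have "\<dots> = (\<Sum>f\<in>S i. size (phi G f))" unfolding phiS_def by (rule size_msum)
  also have "\<dots> = (\<Sum>f\<in>S i. size (mset_set (diffs G f)))"
    using SK by (intro sum.cong) (auto simp: size_phi[OF fin])
  also have "\<dots> = size (dS G (S i))" unfolding dS_def by (rule size_msum[symmetric])
  also have "\<dots> = sum (count (dS G (S i))) (DD i)" unfolding DD_def by (rule size_sum)
  also have "\<dots> = sum (\<lambda>_. 1) (DD i)"
  proof (intro sum.cong refl)
    fix x assume "x \<in> DD i"
    then have "count (dS G (S i)) x > 0" unfolding DD_def by simp
    then show "count (dS G (S i)) x = 1" using count_le1'[OF i, of x] by linarith
  qed
  also have "\<dots> = card (DD i)" by simp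
  finally show ?thesis .
qed

lemma Horb_unique:
  assumes i: "i \<in> {2..r}" and l: "l \<in> Rs i" and m: "m \<in> Rs i" and cH: "c \<in> H"
    and mc: "m = edge_act G l c"
  shows "m = l"
proof (rule ccontr)
  assume ml: "m \<noteq> l"
  let ?R = "Rs i"
  let ?\<Delta> = "(\<lambda>f. diffs G f) ` ?R"
  let ?fib = "\<lambda>d. {f \<in> ?R. diffs G f = d}"
  have RK: "?R \<subseteq> Kedges G" using Rs_K[OF i] .
  have fR: "finite ?R" using finK RK finite_subset by blast
  have c: "c \<in> carrier G" using cH Hc by auto
  have oneH: "\<one> \<in> H" using H_sub subgroup.one_closed by blast
  have lK: "l \<in> Kedges G" using l RK by auto
  have self_orb: "f \<in> Orb G H f" if "f \<in> Kedges G" for f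
  proof -
    have "edge_act G f \<one> = f" using that ea_one unfolding Kedges_def by auto
    then show ?thesis unfolding Orb_def using oneH by force
  qed
  have c1: "card ?R = (\<Sum>d\<in>?\<Delta>. card (?fib d))"
  proof -
    have "(\<Sum>d\<in>?\<Delta>. sum (\<lambda>_. 1::nat) {f. f \<in> ?R \<and> diffs G f = d}) = sum (\<lambda>_. 1) ?R"
      by (rule sum.group) (use fR in auto)
    then show ?thesis by simp
  qed
  have DDU: "DD i = \<Union>?\<Delta>"
  proof -
    have "DD i = set_mset (dS G ?R)" unfolding DD_def using R1 i by blast
    also have "\<dots> = \<Union>?\<Delta>" using set_dS[OF RK] by simp
    finally show ?thesis .
  qed
  have c2: "card (DD i) \<le> (\<Sum>d\<in>?\<Delta>. card d)" unfolding DDU by (rule card_Union_le_sum_card)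
  have cls: "card (diffs G f) = 2 \<and> long_edge G f \<or> card (diffs G f) = 1 \<and> short_edge G f"
    if "f \<in> Kedges G" for f
    using edge_class[OF fin that] long_iff[OF fin that] by auto
  have le: "card d \<le> card (?fib d)" if d: "d \<in> ?\<Delta>" for d
  proof -
    obtain l0 where l0: "l0 \<in> ?R" "d = diffs G l0" using d by auto
    have l0K: "l0 \<in> Kedges G" using l0 RK by auto
    have ff: "finite (?fib d)" using fR by simp
    have in0: "l0 \<in> ?fib d" using l0 by simp
    from cls[OF l0K] show ?thesis
    proof
      assume h: "card (diffs G l0) = 2 \<and> long_edge G l0"
      then obtain l' where l': "l' \<in> ?R" "diffs G l0 = diffs G l'" "l' \<notin> Orb G H l0"
        using R2_long i l0 by blast
      have "l' \<noteq> l0" using l'(3) self_orb[OF l0K] by auto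
      then have "card {l0, l'} = 2" by simp
      moreover have "{l0, l'} \<subseteq> ?fib d" using l0 l' by auto
      ultimately have "2 \<le> card (?fib d)" by (metis card_mono ff)
      then show ?thesis using h l0 by simp
    next
      assume h: "card (diffs G l0) = 1 \<and> short_edge G l0"
      have "1 \<le> card (?fib d)" using in0 ff by (metis One_nat_def Suc_leI card_gt_0_iff empty_iff)
      then show ?thesis using h l0 by simp
    qed
  qed
  have dm: "diffs G m = diffs G l" using mc lK c ea_diffs by simp
  have lt: "card (diffs G l) < card (?fib (diffs G l))"
  proof -
    have ff: "finite (?fib (diffs G l))" using fR by simp
    from cls[OF lK] show ?thesis
    proof
      assume h: "card (diffs G l) = 2 \<and> long_edge G l"
      then obtain l' where l': "l' \<in> ?R" "diffs G l = diffs G l'" "l' \<notin> Orb G H l"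
        using R2_long i l by blast
      have "m \<in> Orb G H l" unfolding Orb_def mc using cH by blast
      then have d3: "l' \<noteq> l" "l' \<noteq> m" using l'(3) self_orb[OF lK] by auto
      then have "card {l, m, l'} = 3" using ml by auto
      moreover have "{l, m, l'} \<subseteq> ?fib (diffs G l)" using l m l' dm by auto
      ultimately have "3 \<le> card (?fib (diffs G l))" by (metis card_mono ff)
      then show ?thesis using h by simp
    next
      assume h: "card (diffs G l) = 1 \<and> short_edge G l"
      then have "m = l" using R2_short i l m dm by blast
      then show ?thesis using ml by simp
    qed
  qed
  have "(\<Sum>d\<in>?\<Delta>. card d) < (\<Sum>d\<in>?\<Delta>. card (?fib d))"
    by (rule sum_strict_mono_ex1) (use fR le lt l in auto)
  then have "card (DD i) < card ?R" using c1 c2 by linarith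
  then show False using card_Rs[OF i] by simp
qed

end

context L12 begin

definition RR where "RR = (\<Union>i\<in>{2..r}. Rs i)"
definition XX where "XX a = RR \<union> {a}"
definition tr where "tr a g = edges_act G (XX a) g"

lemma hsc: "h \<in> hs \<Longrightarrow> h \<in> carrier G" using hs_sub Hc by auto

lemma hs_lc: "h \<in> carrier G \<Longrightarrow> h <# {\<one>, j} = {h, h \<otimes> j}"
  unfolding l_coset_def by auto

lemma hs_noj: "h \<in> hs \<Longrightarrow> h' \<in> hs \<Longrightarrow> h = j \<otimes> h' \<Longrightarrow> False"
proof -
  assume h: "h \<in> hs" and h': "h' \<in> hs" and eq: "h = j \<otimes> h'"
  have h'c: "h' \<in> carrier G" using hsc h' by auto
  have "h = h' \<otimes> j" using eq central[OF h'c] by simp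
  moreover have "h' \<otimes> j \<noteq> h'" using h'c jc j_inv(2) by simp
  ultimately have hne: "h \<noteq> h'" using \<open>h = h' \<otimes> j\<close> by simp
  have sub: "{h', h} \<subseteq> hs \<inter> (h' <# {\<one>, j})"
    unfolding hs_lc[OF h'c] using h h' \<open>h = h' \<otimes> j\<close> by simp
  have fhs: "finite hs" using finite_subset[OF subset_trans[OF hs_sub Hc] fin] .
  have "card {h', h} \<le> card (hs \<inter> (h' <# {\<one>, j}))"
    by (rule card_mono[OF _ sub]) (use fhs in simp)
  moreover have "card (hs \<inter> (h' <# {\<one>, j})) = 1" using hs_reps h' hs_sub by blast
  ultimately show False using hne by simp
qed

lemma H_split: "H = hs \<union> (\<lambda>h. j \<otimes> h) ` hs"
proof
  show "hs \<union> (\<lambda>h. j \<otimes> h) ` hs \<subseteq> H"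
    using hs_sub j_inv(1) H_sub by (auto intro: subgroup.m_closed)
  show "H \<subseteq> hs \<union> (\<lambda>h. j \<otimes> h) ` hs"
  proof
    fix h assume hH: "h \<in> H"
    then have hc: "h \<in> carrier G" using Hc by auto
    have "card (hs \<inter> {h, h \<otimes> j}) = 1" using hs_reps hH hs_lc[OF hc] by auto
    then have "hs \<inter> {h, h \<otimes> j} \<noteq> {}"
    proof (intro notI)
      assume "card (hs \<inter> {h, h \<otimes> j}) = 1" "hs \<inter> {h, h \<otimes> j} = {}"
      then show False by simp
    qed
    then have "h \<in> hs \<or> h \<otimes> j \<in> hs" by blast
    moreover have "h = j \<otimes> (h \<otimes> j)" using hc jc central[OF hc] jj[OF hc] by simp
    ultimately show "h \<in> hs \<union> (\<lambda>h. j \<otimes> h) ` hs" by blast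
  qed
qed

lemma H_disj: "hs \<inter> (\<lambda>h. j \<otimes> h) ` hs = {}"
  using hs_noj by blast

lemma card_H: "card H = n"
  using lagrange[OF H_sub] H_idx ord by simp

lemma card_hs: "2 * card hs = n"
proof -
  have fhs: "finite hs" using finite_subset[OF subset_trans[OF hs_sub Hc] fin] .
  have "inj_on (\<lambda>h. j \<otimes> h) hs" using hsc jc by (auto intro: inj_onI)
  then have "card ((\<lambda>h. j \<otimes> h) ` hs) = card hs" by (rule card_image)
  moreover have "card H = card hs + card ((\<lambda>h. j \<otimes> h) ` hs)"
    unfolding H_split using fhs H_disj by (simp add: card_Un_disjoint)
  ultimately show ?thesis using card_H by simp
qed

lemma RR_K: "RR \<subseteq> Kedges G" unfolding RR_def using R_edges by blast

lemma e12K: "a \<in> {e1, e2} \<Longrightarrow> a \<in> Kedges G \<and> diffs G a = {j}"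
  using Orb_e_edges e12 by auto

lemma XX_K: "a \<in> {e1, e2} \<Longrightarrow> XX a \<subseteq> Kedges G"
  unfolding XX_def using RR_K e12K by auto

lemma common:
  assumes a: "a \<in> {e1, e2}" and b: "b \<in> {e1, e2}" and g: "g \<in> H" and g': "g' \<in> H"
    and f1: "f \<in> tr a g" and f2: "f \<in> tr b g'"
  shows "g = g' \<or> (a = b \<and> g = j \<otimes> g')"
proof -
  have gc: "g \<in> carrier G" and g'c: "g' \<in> carrier G" using g g' Hc by auto
  obtain x where x: "x \<in> XX a" "f = edge_act G x g" using f1 unfolding tr_def edges_act_def by auto
  obtain y where y: "y \<in> XX b" "f = edge_act G y g'" using f2 unfolding tr_def edges_act_def by auto
  have xK: "x \<in> Kedges G" using x XX_K[OF a] by auto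
  have yK: "y \<in> Kedges G" using y XX_K[OF b] by auto
  have xs: "x \<subseteq> carrier G" and ys: "y \<subseteq> carrier G" using xK yK unfolding Kedges_def by auto
  define c where "c = g \<otimes> inv g'"
  have cH: "c \<in> H" unfolding c_def using g g' H_sub by (simp add: subgroup.m_closed subgroup.m_inv_closed)
  have cc: "c \<in> carrier G" using cH Hc by auto
  have "edge_act G f (inv g') = edge_act G y (g' \<otimes> inv g')" using y ys g'c by (simp add: ea_comp)
  then have y1: "edge_act G f (inv g') = y" using ys g'c by (simp add: ea_one)
  have "edge_act G f (inv g') = edge_act G x c" unfolding c_def using x xs gc g'c by (simp add: ea_comp)
  then have yx: "y = edge_act G x c" using y1 by simp
  have dxy: "diffs G y = diffs G x" using yx xK cc ea_diffs by simp
  have gg: "g = c \<otimes> g'" unfolding c_def using gc g'c by (simp add: m_assoc)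
  show ?thesis
  proof (cases "x \<in> RR")
    case xR: True
    then obtain i where i: "i \<in> {2..r}" "x \<in> Rs i" unfolding RR_def by auto
    show ?thesis
    proof (cases "y \<in> RR")
      case True
      then obtain i' where i': "i' \<in> {2..r}" "y \<in> Rs i'" unfolding RR_def by auto
      have "i = i'"
      proof (rule ccontr)
        assume "i \<noteq> i'"
        then have "DD i \<inter> DD i' = {}" using DD_disj i i' by auto
        moreover have "diffs G x \<subseteq> DD i" "diffs G x \<noteq> {}" using R_edges[OF i] by auto
        moreover have "diffs G x \<subseteq> DD i'" using R_edges[OF i'] dxy by auto
        ultimately show False by blast
      qed
      then have "y = x" using Horb_unique[OF i(1) i(2) _ cH yx] i' by simp
      then have "c = \<one>" using Rstab[OF i cH] yx by simp
      then show ?thesis using gg g'c by simp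
    next
      case False
      then have "y = b" using y unfolding XX_def by auto
      then have "diffs G x = {j}" using dxy e12K[OF b] by simp
      then have "j \<in> diffs G x" by simp
      then show ?thesis using R_edges[OF i] by simp
    qed
  next
    case False
    then have xa: "x = a" using x unfolding XX_def by auto
    show ?thesis
    proof (cases "y \<in> RR")
      case True
      then obtain i' where i': "i' \<in> {2..r}" "y \<in> Rs i'" unfolding RR_def by auto
      have "j \<in> diffs G y" using dxy e12K[OF a] xa by simp
      then show ?thesis using R_edges[OF i'] by simp
    next
      case False
      then have yb: "y = b" using y unfolding XX_def by auto
      show ?thesis
      proof (cases "a = b")
        case True
        then have "edge_act G a c = a" using yx xa yb by simp
        then have "c = \<one> \<or> c = j" using jstab e12K[OF a] cc by blast
        then show ?thesis using gg g'c True by auto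
      next
        case False
        then have ab: "(a = e1 \<and> b = e2) \<or> (a = e2 \<and> b = e1)" using a b by auto
        have "b \<in> Orb G H a" unfolding Orb_def using yx xa yb cH by blast
        moreover have "b \<in> Orb G H b"
        proof -
          have "edge_act G b \<one> = b" using e12K[OF b] ea_one unfolding Kedges_def by auto
          then show ?thesis unfolding Orb_def using H_sub subgroup.one_closed by force
        qed
        ultimately have bb: "b \<in> Orb G H a \<inter> Orb G H b" by (rule IntI)
        from ab have "Orb G H a \<inter> Orb G H b = {}"
        proof (elim disjE conjE)
          assume "a = e1" "b = e2" then show ?thesis using e12(4) by simp
        next
          assume "a = e2" "b = e1" then show ?thesis using e12(4) by (simp add: Int_commute)
        qed
        then show ?thesis using bb by simp
      qed
    qed
  qed
qed

end

context L12 begin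

abbreviation "FF \<equiv> assoc_factorization G r S Hs"

lemma base_K: "i \<in> {1..r} \<Longrightarrow> base_factor G S Hs i \<subseteq> Kedges G"
proof
  fix f assume i: "i \<in> {1..r}" and f: "f \<in> base_factor G S Hs i"
  obtain f0 h where f0: "f0 \<in> S i" "h \<in> Hs i" "f = edge_act G f0 h"
    using f unfolding base_factor_def Orb_def by auto
  have "h \<in> carrier G" using f0(2) Hsg[OF i] subgroup.subset by blast
  then show "f \<in> Kedges G" using f0 Sk[OF i] ea_Kedges by auto
qed

lemma FF_act: "F \<in> FF \<Longrightarrow> g \<in> carrier G \<Longrightarrow> \<exists>F'\<in>FF. F' \<subseteq> Kedges G \<and> F = edges_act G F' g"
proof -
  assume F: "F \<in> FF" and g: "g \<in> carrier G"
  then obtain i where i: "i \<in> {1..r}" "F \<in> factor_orbit G S Hs i"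
    unfolding assoc_factorization_def by auto
  obtain g0 where g0: "g0 \<in> carrier G" "F = edges_act G (base_factor G S Hs i) g0"
    using i(2) unfolding factor_orbit_def by auto
  define F' where "F' = edges_act G (base_factor G S Hs i) (g0 \<otimes> inv g)"
  have "g0 \<otimes> inv g \<in> carrier G" using g0 g by simp
  then have "F' \<in> factor_orbit G S Hs i" unfolding F'_def factor_orbit_def by (rule imageI)
  then have F'F: "F' \<in> FF" unfolding assoc_factorization_def using i(1) by blast
  have F'K: "F' \<subseteq> Kedges G" unfolding F'_def using base_K[OF i(1)] g0 g eas_Kedges by simp
  have "edges_act G F' g = edges_act G (base_factor G S Hs i) (g0 \<otimes> inv g \<otimes> g)"
    unfolding F'_def using base_K[OF i(1)] g0 g by (simp add: eas_comp)
  also have "g0 \<otimes> inv g \<otimes> g = g0" using g0 g by (simp add: m_assoc)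
  finally show ?thesis using F'F F'K g0 by auto
qed

lemma rainbow_base: "a \<in> {e1, e2} \<Longrightarrow> F \<in> FF \<Longrightarrow> card (XX a \<inter> F) = 1"
proof -
  assume a: "a \<in> {e1, e2}" and F: "F \<in> FF"
  then obtain i where i: "i \<in> {1..r}" "F \<in> factor_orbit G S Hs i"
    unfolding assoc_factorization_def by auto
  have aK: "a \<in> Kedges G" "diffs G a = {j}" using e12K[OF a] by auto
  show ?thesis
  proof (cases "i = 1")
    case True
    then have F1: "F = Orb G (carrier G) e" using factor1 i by simp
    have "XX a \<inter> F = {a}"
    proof
      show "{a} \<subseteq> XX a \<inter> F" unfolding XX_def F1 using a e12 by auto
      show "XX a \<inter> F \<subseteq> {a}"
      proof
        fix x assume x: "x \<in> XX a \<inter> F"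
        show "x \<in> {a}"
        proof (rule ccontr)
          assume "x \<notin> {a}"
          then have "x \<in> RR" using x unfolding XX_def by auto
          then obtain k where k: "k \<in> {2..r}" "x \<in> Rs k" unfolding RR_def by auto
          have "diffs G x = {j}" using x F1 Orb_e_edges by auto
          then show False using R_edges[OF k] by simp
        qed
      qed
    qed
    then show ?thesis by simp
  next
    case False
    then have i2: "i \<in> {2..r}" using i by auto
    have "XX a \<inter> F = Rs i \<inter> F"
    proof
      show "Rs i \<inter> F \<subseteq> XX a \<inter> F" unfolding XX_def RR_def using i2 by auto
      show "XX a \<inter> F \<subseteq> Rs i \<inter> F"
      proof
        fix x assume x: "x \<in> XX a \<inter> F"
        have dx: "diffs G x \<subseteq> DD i" using factor_edges[OF i(1) i(2)] x by auto
        show "x \<in> Rs i \<inter> F"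
        proof (cases "x = a")
          case True
          then have "j \<in> DD i" using dx aK by auto
          then show ?thesis using jnot[OF i2] by simp
        next
          case False
          then have "x \<in> RR" using x unfolding XX_def by auto
          then obtain k where k: "k \<in> {2..r}" "x \<in> Rs k" unfolding RR_def by auto
          have "k = i"
          proof (rule ccontr)
            assume "k \<noteq> i"
            then have "DD k \<inter> DD i = {}" using DD_disj k i by auto
            moreover have "diffs G x \<subseteq> DD k" "diffs G x \<noteq> {}" using R_edges[OF k] by auto
            ultimately show False using dx by blast
          qed
          then show ?thesis using k x by auto
        qed
      qed
    qed
    then show ?thesis using R1 i2 i(2) by auto
  qed
qed

lemma tree_props:
  assumes a: "a \<in> {e1, e2}" and g: "g \<in> carrier G"
  shows "spanning_connected G (tr a g)" "\<forall>F\<in>FF. card (tr a g \<inter> F) = 1"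
    "tr a g \<subseteq> Kedges G" "edge_act G a g \<in> tr a g"
proof -
  have XK: "XX a \<subseteq> Kedges G" using XX_K[OF a] .
  have "spanning_connected G (XX a)" using a conn1 conn2 unfolding XX_def RR_def by auto
  then show "spanning_connected G (tr a g)" unfolding tr_def using g by (rule conn_act)
  show "tr a g \<subseteq> Kedges G" unfolding tr_def using XK g by (rule eas_Kedges)
  show "edge_act G a g \<in> tr a g" unfolding tr_def edges_act_def XX_def by auto
  show "\<forall>F\<in>FF. card (tr a g \<inter> F) = 1"
  proof
    fix F assume F: "F \<in> FF"
    obtain F' where F': "F' \<in> FF" "F' \<subseteq> Kedges G" "F = edges_act G F' g" using FF_act[OF F g] by blast
    have "tr a g \<inter> F = edges_act G (XX a \<inter> F') g" unfolding tr_def F'(3)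
      using eas_Int[OF XK F'(2) g] by simp
    moreover have "card (edges_act G (XX a \<inter> F') g) = card (XX a \<inter> F')"
      by (rule card_eas[OF subset_trans[OF Int_lower1 XK] g])
    ultimately show "card (tr a g \<inter> F) = 1" using rainbow_base[OF a F'(1)] by simp
  qed
qed

end

context L12 begin

definition idx where "idx a g \<longleftrightarrow> (a = e1 \<and> g \<in> hs) \<or> (a = e2 \<and> g \<in> (\<lambda>h. j \<otimes> h) ` hs)"

lemma idx_H: "idx a g \<Longrightarrow> a \<in> {e1, e2} \<and> g \<in> H \<and> g \<in> carrier G"
proof -
  assume "idx a g"
  then have "a \<in> {e1, e2}" "g \<in> H" unfolding idx_def using H_split by auto
  then show ?thesis using Hc by auto
qed

lemma disj_idx:
  assumes ia: "idx a g" and ib: "idx b g'" and ne: "tr a g \<inter> tr b g' \<noteq> {}"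
  shows "a = b \<and> g = g'"
proof -
  obtain f where f: "f \<in> tr a g" "f \<in> tr b g'" using ne by blast
  have A: "a \<in> {e1, e2}" "g \<in> H" and B: "b \<in> {e1, e2}" "g' \<in> H" using idx_H[OF ia] idx_H[OF ib] by auto
  have c: "g = g' \<or> (a = b \<and> g = j \<otimes> g')" using common[OF A(1) B(1) A(2) B(2) f] .
  have ia': "a = e1 \<Longrightarrow> g \<in> hs" "a = e2 \<Longrightarrow> g \<in> (\<lambda>h. j \<otimes> h) ` hs"
    using ia e12(3) unfolding idx_def by auto
  have ib': "b = e1 \<Longrightarrow> g' \<in> hs" "b = e2 \<Longrightarrow> g' \<in> (\<lambda>h. j \<otimes> h) ` hs"
    using ib e12(3) unfolding idx_def by auto
  from c show ?thesis
  proof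
    assume gg: "g = g'"
    show ?thesis
    proof (cases "a = b")
      case True then show ?thesis using gg by simp
    next
      case False
      then have "(a = e1 \<and> b = e2) \<or> (a = e2 \<and> b = e1)" using A B by auto
      then have "g \<in> hs \<inter> (\<lambda>h. j \<otimes> h) ` hs" using ia' ib' gg by auto
      then show ?thesis using H_disj by simp
    qed
  next
    assume h: "a = b \<and> g = j \<otimes> g'"
    show ?thesis
    proof (cases "a = e1")
      case True
      then have "g \<in> hs" "g' \<in> hs" using ia' ib' h by auto
      then show ?thesis using hs_noj h by blast
    next
      case False
      then have "a = e2" "b = e2" using A h by auto
      then obtain h1 h2 where hh: "h1 \<in> hs" "g = j \<otimes> h1" "h2 \<in> hs" "g' = j \<otimes> h2"
        using ia' ib' by blast
      have "j \<otimes> h1 = j \<otimes> (j \<otimes> h2)" using h hh by simp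
      also have "\<dots> = h2" using jj hsc hh(3) by simp
      finally have "h2 = j \<otimes> h1" by simp
      then show ?thesis using hs_noj hh by blast
    qed
  qed
qed

lemma tr_ne: "idx a g \<Longrightarrow> tr a g \<noteq> {}"
proof -
  assume "idx a g"
  then have "a \<in> {e1, e2}" "g \<in> carrier G" using idx_H by auto
  then have "edge_act G a g \<in> tr a g" by (rule tree_props(4))
  then show ?thesis by blast
qed

lemma choose2: "(2 * n) choose 2 = n * (2 * n - 1)"
proof -
  have "(2 * n) choose 2 = 2 * n * (2 * n - 1) div 2" by (simp add: choose_two)
  also have "2 * n * (2 * n - 1) = 2 * (n * (2 * n - 1))" by simp
  finally show ?thesis by simp
qed

lemma main:
  "complete_rainbow_set G FF
     ((\<lambda>h. edges_act G ((\<Union>i\<in>{2..r}. Rs i) \<union> {e1}) h) ` hs \<union>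
      (\<lambda>h. edges_act G (edges_act G (\<Union>i\<in>{2..r}. Rs i) j \<union> {e2}) h) ` hs)"
proof -
  let ?A = "(\<lambda>h. tr e1 h) ` hs"
  let ?B = "(\<lambda>h. tr e2 (j \<otimes> h)) ` hs"
  have e2K: "e2 \<in> Kedges G" "diffs G e2 = {j}" using e12K[of e2] by auto
  have X2j: "edges_act G RR j \<union> {e2} = edges_act G (XX e2) j"
    unfolding XX_def edges_act_def using jfix[OF e2K] by simp
  have "(\<lambda>h. edges_act G (RR \<union> {e1}) h) ` hs = ?A" unfolding tr_def XX_def ..
  moreover have "(\<lambda>h. edges_act G (edges_act G RR j \<union> {e2}) h) ` hs = ?B"
    unfolding X2j tr_def using XX_K[of e2] jc hsc by (intro image_cong) (auto simp: eas_comp)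
  ultimately have TTeq: "(\<lambda>h. edges_act G ((\<Union>i\<in>{2..r}. Rs i) \<union> {e1}) h) ` hs \<union>
      (\<lambda>h. edges_act G (edges_act G (\<Union>i\<in>{2..r}. Rs i) j \<union> {e2}) h) ` hs = ?A \<union> ?B"
    unfolding RR_def by simp
  define TT where "TT = ?A \<union> ?B"
  have form: "\<exists>a g. idx a g \<and> T = tr a g" if "T \<in> TT" for T
    using that unfolding TT_def idx_def by auto
  have pw: "T1 \<inter> T2 = {}" if hT: "T1 \<in> TT" "T2 \<in> TT" "T1 \<noteq> T2" for T1 T2
  proof (rule ccontr)
    assume ne: "T1 \<inter> T2 \<noteq> {}"
    obtain a g where a: "idx a g" "T1 = tr a g" using form hT(1) by blast
    obtain b g' where b: "idx b g'" "T2 = tr b g'" using form hT(2) by blast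
    have "a = b \<and> g = g'" using disj_idx[OF a(1) b(1)] ne a b by simp
    then show False using a b hT(3) by simp
  qed
  have props: "spanning_connected G T \<and> (\<forall>F\<in>FF. card (T \<inter> F) = 1) \<and> T \<subseteq> Kedges G" if hT: "T \<in> TT" for T
  proof -
    obtain a g where a: "idx a g" "T = tr a g" using form hT by blast
    then show ?thesis using tree_props idx_H[OF a(1)] by auto
  qed
  have idx1: "idx e1 h" if "h \<in> hs" for h using that unfolding idx_def by auto
  have idx2: "idx e2 (j \<otimes> h)" if "h \<in> hs" for h using that unfolding idx_def by auto
  have fhs: "finite hs" using finite_subset[OF subset_trans[OF hs_sub Hc] fin] .
  have injA: "inj_on (\<lambda>h. tr e1 h) hs"
  proof (rule inj_onI)
    fix h h' assume h: "h \<in> hs" "h' \<in> hs" and eq: "tr e1 h = tr e1 h'"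
    then have "tr e1 h \<inter> tr e1 h' \<noteq> {}" using tr_ne[OF idx1[OF h(1)]] by simp
    then show "h = h'" using disj_idx[OF idx1[OF h(1)] idx1[OF h(2)]] by simp
  qed
  have injB: "inj_on (\<lambda>h. tr e2 (j \<otimes> h)) hs"
  proof (rule inj_onI)
    fix h h' assume h: "h \<in> hs" "h' \<in> hs" and eq: "tr e2 (j \<otimes> h) = tr e2 (j \<otimes> h')"
    then have "tr e2 (j \<otimes> h) \<inter> tr e2 (j \<otimes> h') \<noteq> {}" using tr_ne[OF idx2[OF h(1)]] by simp
    then have "j \<otimes> h = j \<otimes> h'" using disj_idx[OF idx2[OF h(1)] idx2[OF h(2)]] by simp
    then show "h = h'" using h hsc jc by simp
  qed
  have ABdisj: "?A \<inter> ?B = {}"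
  proof (rule ccontr)
    assume "?A \<inter> ?B \<noteq> {}"
    then obtain h h' where h: "h \<in> hs" "h' \<in> hs" and eq: "tr e1 h = tr e2 (j \<otimes> h')" by auto
    then have "tr e1 h \<inter> tr e2 (j \<otimes> h') \<noteq> {}" using tr_ne[OF idx1[OF h(1)]] by simp
    then have "e1 = e2" using disj_idx[OF idx1[OF h(1)] idx2[OF h(2)]] by simp
    then show False using e12(3) by simp
  qed
  have cardTT: "card TT = n"
  proof -
    have "card TT = card ?A + card ?B" unfolding TT_def
      using ABdisj fhs by (simp add: card_Un_disjoint)
    also have "\<dots> = card hs + card hs" using card_image[OF injA] card_image[OF injB] by simp
    finally show ?thesis using card_hs by simp
  qed
  have fTT: "finite TT" unfolding TT_def using fhs by simp
  have cV: "card (carrier G) = 2 * n" using ord unfolding order_def .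
  have KV: "Kedges G = {B. B \<subseteq> carrier G \<and> card B = 2}" unfolding Kedges_def by simp
  have cK: "card (Kedges G) = n * (2 * n - 1)" unfolding KV n_subsets[OF fin] cV choose2 ..
  have oneV: "\<one> \<in> carrier G" by simp
  have lower: "2 * n - 1 \<le> card T" if "T \<in> TT" for T
  proof -
    have T: "T \<subseteq> {e. e \<subseteq> carrier G \<and> card e = 2}" "\<forall>x\<in>carrier G. \<forall>y\<in>carrier G. (x, y) \<in> (adj_rel T)\<^sup>*"
      using props[OF that] unfolding spanning_connected_def Kedges_def by auto
    have "card (carrier G) \<le> card T + 1" by (rule conn_card[OF fin T(1) T(2) oneV])
    then show ?thesis using cV by simp
  qed
  have finT: "finite T" if "T \<in> TT" for T
    using props[OF that] finK finite_subset by blast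
  have UK: "\<Union>TT \<subseteq> Kedges G" using props by blast
  have cU: "card (\<Union>TT) = sum card TT"
    by (rule card_Union_disjoint) (use pw finT in \<open>auto simp: pairwise_def disjnt_def\<close>)
  have "card (\<Union>TT) \<le> card (Kedges G)" using UK finK by (rule card_mono[rotated])
  then have sumle: "sum card TT \<le> n * (2 * n - 1)" using cU cK by simp
  have exact: "card T = 2 * n - 1" if "T \<in> TT" for T
  proof (rule ccontr)
    assume "card T \<noteq> 2 * n - 1"
    then have "2 * n - 1 < card T" using lower[OF that] by simp
    then have "sum (\<lambda>_. 2 * n - 1) TT < sum card TT"
      by (intro sum_strict_mono_ex1[OF fTT]) (use lower that in auto)
    then show False using sumle cardTT by simp
  qed
  have "sum card TT = sum (\<lambda>_. 2 * n - 1) TT" using exact by (rule sum.cong[OF refl])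
  then have "card (\<Union>TT) = card (Kedges G)" using cU cK cardTT by simp
  then have Ueq: "\<Union>TT = Kedges G" using card_subset_eq[OF finK UK] by simp
  have tree: "rainbow_spanning_tree G FF T" if "T \<in> TT" for T
  proof -
    have T: "T \<subseteq> {e. e \<subseteq> carrier G \<and> card e = 2}" "\<forall>x\<in>carrier G. \<forall>y\<in>carrier G. (x, y) \<in> (adj_rel T)\<^sup>*"
      using props[OF that] unfolding spanning_connected_def Kedges_def by auto
    have "card T + 1 = card (carrier G)" using exact[OF that] cV n_gt by simp
    then have "\<not> has_cycle T" by (rule no_cycle[OF fin T(1) T(2) oneV])
    then show ?thesis using props[OF that] unfolding rainbow_spanning_tree_def spanning_tree_def by auto
  qed
  have "complete_rainbow_set G FF TT"
    unfolding complete_rainbow_set_def using tree Ueq pw by blast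
  then show ?thesis using TTeq unfolding TT_def by simp
qed

end


theorem lemma1p2:
  fixes G :: "('a, 'b) monoid_scheme"
    and n r :: nat and H :: "'a set" and j :: 'a and hs :: "'a set"
    and S :: "nat \<Rightarrow> 'a set set" and Hs :: "nat \<Rightarrow> 'a set"
    and e e1 e2 :: "'a set" and Rs :: "nat \<Rightarrow> 'a set set"
  assumes grp: "group G" and fin: "finite (carrier G)"
    and n_gt: "n > 2" and n_even: "even n" and ord: "order G = 2 * n"
    and H_sub: "subgroup H G" and H_cyc: "cyclic_group (G\<lparr>carrier := H\<rparr>)"
    and H_idx: "card (rcosets\<^bsub>G\<^esub> H) = 2"
    and j_inv: "j \<in> H" "j \<noteq> \<one>\<^bsub>G\<^esub>" "j \<otimes>\<^bsub>G\<^esub> j = \<one>\<^bsub>G\<^esub>"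
    and j_unique: "\<forall>x\<in>H. x \<noteq> \<one>\<^bsub>G\<^esub> \<and> x \<otimes>\<^bsub>G\<^esub> x = \<one>\<^bsub>G\<^esub> \<longrightarrow> x = j"
    and hs_sub: "hs \<subseteq> H"
    and hs_reps: "\<forall>h\<in>H. card (hs \<inter> (h <#\<^bsub>G\<^esub> {\<one>\<^bsub>G\<^esub>, j})) = 1"
    and st: "starter G r S Hs"
    and S1: "S 1 = {e}" and de: "diffs G e = {j}"
    and R1: "\<forall>i\<in>{2..r}. Rs i \<subseteq> \<Union>(factor_orbit G S Hs i)
              \<and> card (Rs i) = card (rcosets\<^bsub>G\<^esub> (Hs i))
              \<and> (\<forall>F\<in>factor_orbit G S Hs i. card (Rs i \<inter> F) = 1)
              \<and> set_mset (dS G (Rs i)) = set_mset (dS G (S i))"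
    and R2_long: "\<forall>i\<in>{2..r}. \<forall>l\<in>Rs i. long_edge G l \<longrightarrow>
              (\<exists>!l'. l' \<in> Rs i \<and> diffs G l = diffs G l' \<and> l' \<notin> Orb G H l)"
    and R2_short: "\<forall>i\<in>{2..r}. \<forall>l\<in>Rs i. short_edge G l \<longrightarrow>
              (\<forall>l'\<in>Rs i. diffs G l' = diffs G l \<longrightarrow> l' = l)"
    and e12: "e1 \<in> Orb G (carrier G) e" "e2 \<in> Orb G (carrier G) e" "e1 \<noteq> e2"
             "Orb G H e1 \<inter> Orb G H e2 = {}"
    and conn1: "spanning_connected G ((\<Union>i\<in>{2..r}. Rs i) \<union> {e1})"
    and conn2: "spanning_connected G ((\<Union>i\<in>{2..r}. Rs i) \<union> {e2})"
  shows "complete_rainbow_set G (assoc_factorization G r S Hs)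
           ((\<lambda>h. edges_act G ((\<Union>i\<in>{2..r}. Rs i) \<union> {e1}) h) ` hs \<union>
            (\<lambda>h. edges_act G (edges_act G (\<Union>i\<in>{2..r}. Rs i) j \<union> {e2}) h) ` hs)"
proof -
  interpret L12 G n r H j hs S Hs e e1 e2 Rs
    apply (rule L12.intro[OF grp])
    apply (rule L12_axioms.intro)
    apply (rule assms)+
    done
  show ?thesis by (rule main)
qed

end
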